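(* Let $n\ge1$, $m \ge 1$ be integers and $\lambda > 1$, $\sigma > 1$ real numbers, and let $a_\alpha$, $a$, $b$ be as in the context. There is a constant $C > 0$ depending only on $n, m, \lambda, \sigma$ such that for every solution $u$ of the inequality $\sum_{|\alpha| = m} (-1)^m \partial^\alpha a_\alpha(x, u) \ge b(x) |u|^\lambda$ in $\mathbb{R}^n$ the following holds: if $0 < r_1 < r_2$ are real numbers with $r_2 \le \sqrt{\sigma}\, r_1$, $2J(r_1) \le J(r_2)$ and $J(r_1) > 0$, then $$J^{(1/\lambda - 1)/m}(r_1) - J^{(1/\lambda - 1)/m}(r_2) \ge C \int_{r_1}^{r_2} r^{(1/\lambda - 1) n/m} h^{1/(\lambda m)}(r)\, dr,$$ where $J$ and $h$ are defined in the context.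
   Context: For each multi-index $\alpha$ with $|\alpha| = m$, $a_\alpha : \mathbb{R}^n \times \mathbb{R} \to \mathbb{R}$ is a given function and $\partial^\alpha = \partial^{|\alpha|}/\partial x_1^{\alpha_1}\cdots\partial x_n^{\alpha_n}$. The function $b : \mathbb{R}^n \to (0,\infty)$ is positive measurable, and $a : \mathbb{R}^n \to (0,\infty)$ is positive measurable with $|a_\alpha(x,\zeta)| \le a(x)|\zeta|$ for almost all $x$, all $\zeta \in \mathbb{R}$, all $|\alpha|=m$. $B_r$ is the open ball of radius $r$ centered at $0$ in $\mathbb{R}^n$. A solution is a function $u$ with $b|u|^\lambda \in L_{1,loc}(\mathbb{R}^n)$, $a_\alpha(x,u) \in L_{1,loc}(\mathbb{R}^n)$ for all $|\alpha|=m$, and $\int_{\mathbb{R}^n} \sum_{|\alpha|=m} a_\alpha(x,u)\partial^\alpha\varphi\,dx \ge \int_{\mathbb{R}^n} b|u|^\lambda \varphi\,dx$ for all non-negative $\varphi \in C_0^\infty(\mathbb{R}^n)$. For $r>0$: $J(r) = \int_{B_r} b(x)|u|^\lambda\,dx$ and $$h(r) = \left( \frac{1}{r^n} \int_{B_{\sqrt{\sigma} r} \setminus B_{r/\sqrt{\sigma}}} a^{\lambda/(\lambda-1)}(x) b^{-1/(\lambda-1)}(x)\,dx \right)^{1-\lambda},$$ with $h(r) = 0$ if the integral equals $\infty$. *)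

theory Defs
  imports "HOL-Analysis.Analysis"
begin

text \<open>Points of R^n are vectors of type real^'n, n = CARD('n).
  Multi-indices are functions 'n => nat; |alpha| = sum alpha UNIV.\<close>

definition mindices :: "nat \<Rightarrow> ('n::finite \<Rightarrow> nat) set" where
  "mindices m = {\<alpha>. sum \<alpha> UNIV = m}"

definition dpartial :: "'n::finite \<Rightarrow> (real^'n \<Rightarrow> real) \<Rightarrow> real^'n \<Rightarrow> real" where
  "dpartial i f x = deriv (\<lambda>t. f (x + t *\<^sub>R axis i 1)) 0"

definition iter_partial :: "'n::finite list \<Rightarrow> (real^'n \<Rightarrow> real) \<Rightarrow> real^'n \<Rightarrow> real" where
  "iter_partial ds f = foldr dpartial ds f"

definition test_fun :: "(real^'n::finite \<Rightarrow> real) \<Rightarrow> bool" where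
  "test_fun \<phi> \<longleftrightarrow>
     (\<forall>ds. continuous_on UNIV (iter_partial ds \<phi>) \<and>
        (\<forall>x i. (\<lambda>t. iter_partial ds \<phi> (x + t *\<^sub>R axis i 1)) differentiable (at 0)))
     \<and> bounded {x. \<phi> x \<noteq> 0}"

text \<open>partial^alpha: differentiate alpha i times in direction i (order is
  irrelevant for smooth functions).\<close>
definition mpartial :: "('n::finite \<Rightarrow> nat) \<Rightarrow> (real^'n \<Rightarrow> real) \<Rightarrow> real^'n \<Rightarrow> real" where
  "mpartial \<alpha> f = iter_partial (SOME ds. \<forall>i. count (mset ds) i = \<alpha> i) f"

definition loc_integrable :: "(real^'n::finite \<Rightarrow> real) \<Rightarrow> bool" where
  "loc_integrable f \<longleftrightarrow> (\<forall>K. compact K \<longrightarrow> set_integrable lebesgue K f)"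

definition is_solution ::
  "nat \<Rightarrow> real \<Rightarrow> (('n::finite \<Rightarrow> nat) \<Rightarrow> real^'n \<Rightarrow> real \<Rightarrow> real) \<Rightarrow> (real^'n \<Rightarrow> real)
     \<Rightarrow> (real^'n \<Rightarrow> real) \<Rightarrow> bool" where
  "is_solution m lam aa b u \<longleftrightarrow>
     loc_integrable (\<lambda>x. b x * \<bar>u x\<bar> powr lam) \<and>
     (\<forall>\<alpha>\<in>mindices m. loc_integrable (\<lambda>x. aa \<alpha> x (u x))) \<and>
     (\<forall>\<phi>. test_fun \<phi> \<and> (\<forall>x. \<phi> x \<ge> 0) \<longrightarrow>
        (\<integral>x. (\<Sum>\<alpha>\<in>mindices m. aa \<alpha> x (u x) * mpartial \<alpha> \<phi> x) \<partial>lebesgue)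
          \<ge> (\<integral>x. b x * \<bar>u x\<bar> powr lam * \<phi> x \<partial>lebesgue))"

definition Jfun :: "real \<Rightarrow> (real^'n::finite \<Rightarrow> real) \<Rightarrow> (real^'n \<Rightarrow> real) \<Rightarrow> real \<Rightarrow> real" where
  "Jfun lam b u r = (LINT x : ball 0 r | lebesgue. b x * \<bar>u x\<bar> powr lam)"

definition hfun :: "real \<Rightarrow> real \<Rightarrow> (real^'n::finite \<Rightarrow> real) \<Rightarrow> (real^'n \<Rightarrow> real) \<Rightarrow> real \<Rightarrow> real" where
  "hfun lam \<sigma> a b r =
     (let I = (\<integral>\<^sup>+ x \<in> ball 0 (sqrt \<sigma> * r) - ball 0 (r / sqrt \<sigma>).
                 ennreal (a x powr (lam / (lam - 1)) * b x powr (- 1 / (lam - 1))) \<partial>lebesgue)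
      in if I = \<infinity> then 0 else (enn2real I / r ^ CARD('n)) powr (1 - lam))"

end

theory Submission
  imports Defs "HOL-Computational_Algebra.Polynomial"
begin


lemma poly_exp_lim: "((\<lambda>s::real. s ^ k * poly p s / exp s) \<longlongrightarrow> 0) at_top"
proof (induction p arbitrary: k)
  case 0
  then show ?case by simp
next
  case (pCons a p)
  have eq: "(\<lambda>s::real. s ^ k * poly (pCons a p) s / exp s) =
      (\<lambda>s. a * (s ^ k / exp s) + s ^ Suc k * poly p s / exp s)"
    by (auto simp: field_simps)
  show ?case unfolding eq
    using tendsto_add[OF tendsto_mult[OF tendsto_const tendsto_power_div_exp_0] pCons.IH[of "Suc k"]]
    by simp
qed

definition towr :: "(nat \<Rightarrow> real \<Rightarrow> real) \<Rightarrow> bool" where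
  "towr D \<longleftrightarrow> (\<forall>j t. (D j has_real_derivative D (Suc j) t) (at t))"

fun Pf :: "nat \<Rightarrow> real poly" where
  "Pf 0 = 1"
| "Pf (Suc j) = monom 1 2 * (Pf j - pderiv (Pf j))"

definition Ff :: "nat \<Rightarrow> real \<Rightarrow> real" where
  "Ff j t = (if t > 0 then poly (Pf j) (1/t) * exp (-1/t) else 0)"

lemma Ff_pos_deriv:
  assumes "t > 0"
  shows "((\<lambda>t. poly (Pf j) (1/t) * exp (-1/t)) has_real_derivative
           poly (Pf (Suc j)) (1/t) * exp (-1/t)) (at t)"
proof -
  have "((\<lambda>t. poly (Pf j) (1/t) * exp (-1/t)) has_real_derivative
      (poly (pderiv (Pf j)) (1/t) * (- 1 / t^2)) * exp (-1/t) + poly (Pf j) (1/t) * (exp (-1/t) * (1/t^2))) (at t)"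
    using assms
    by (auto intro!: derivative_eq_intros DERIV_chain2[OF poly_DERIV] simp: power2_eq_square field_simps)
  moreover have "(poly (pderiv (Pf j)) (1/t) * (- 1 / t^2)) * exp (-1/t) + poly (Pf j) (1/t) * (exp (-1/t) * (1/t^2))
      = poly (Pf (Suc j)) (1/t) * exp (-1/t)"
    by (simp add: poly_monom algebra_simps power2_eq_square)
  ultimately show ?thesis by simp
qed

lemma Ff_deriv0: "(Ff j has_real_derivative 0) (at 0)"
  unfolding has_field_derivative_iff
proof (rule filterlim_split_at)
  have "eventually (\<lambda>y. 0 = (Ff j y - Ff j 0) / (y - 0)) (at_left (0::real))"
    unfolding eventually_at_left_field by (rule exI[of _ "-1"]) (auto simp: Ff_def)
  then show "((\<lambda>y. (Ff j y - Ff j 0) / (y - 0)) \<longlongrightarrow> 0) (at_left 0)"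
    by (rule Lim_transform_eventually[OF tendsto_const])
  have lim: "((\<lambda>y. (\<lambda>s. s ^ 1 * poly (Pf j) s / exp s) (inverse y)) \<longlongrightarrow> 0) (at_right (0::real))"
    by (rule filterlim_compose[OF poly_exp_lim filterlim_inverse_at_top_right])
  have "eventually (\<lambda>y. (\<lambda>s. s ^ 1 * poly (Pf j) s / exp s) (inverse y) = (Ff j y - Ff j 0) / (y - 0)) (at_right (0::real))"
    unfolding eventually_at_right_field
    by (rule exI[of _ 1]) (auto simp: Ff_def exp_minus field_simps)
  then show "((\<lambda>y. (Ff j y - Ff j 0) / (y - 0)) \<longlongrightarrow> 0) (at_right 0)"
    by (rule Lim_transform_eventually[OF lim])
qed

lemma Ff_towr: "towr Ff"
  unfolding towr_def
proof (intro allI)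
  fix j t
  consider "t > 0" | "t < 0" | "t = (0::real)" by linarith
  then show "(Ff j has_real_derivative Ff (Suc j) t) (at t)"
  proof cases
    case 1
    have "(Ff j has_real_derivative poly (Pf (Suc j)) (1/t) * exp (-1/t)) (at t)"
      by (rule has_field_derivative_transform_within_open[OF Ff_pos_deriv[OF 1], of "{0<..}"])
         (use 1 in \<open>auto simp: Ff_def\<close>)
    then show ?thesis using 1 by (simp add: Ff_def)
  next
    case 2
    have "(Ff j has_real_derivative 0) (at t)"
      by (rule has_field_derivative_transform_within_open[OF DERIV_const[of "0::real" "at t"], of "{..<0}"])
         (use 2 in \<open>auto simp: Ff_def\<close>)
    then show ?thesis using 2 by (simp add: Ff_def)
  next
    case 3
    then show ?thesis using Ff_deriv0[of j] by (simp add: Ff_def)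
  qed
qed

lemma Ff_zero: "t \<le> 0 \<Longrightarrow> Ff j t = 0"
  by (simp add: Ff_def)

lemma Ff0_pos: "t > 0 \<Longrightarrow> Ff 0 t > 0"
  by (simp add: Ff_def)

lemma towr_refl: "towr D \<Longrightarrow> towr (\<lambda>j t. (-1)^j * D j (1 - t))"
  unfolding towr_def
proof (intro allI)
  fix j t
  assume D: "\<forall>j t. (D j has_real_derivative D (Suc j) t) (at t)"
  have "((\<lambda>t. D j (1 - t)) has_real_derivative D (Suc j) (1 - t) * (-1)) (at t)"
    by (rule DERIV_chain2[where f = "D j"]) (use D in \<open>auto intro!: derivative_eq_intros\<close>)
  then show "((\<lambda>t. (-1)^j * D j (1 - t)) has_real_derivative (-1)^Suc j * D (Suc j) (1 - t)) (at t)"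
    by (auto intro!: derivative_eq_intros)
qed

lemma Suc_choose': "Suc n choose k = (n choose k) + (if k = 0 then 0 else (n choose (k-1)))"
  by (cases k) simp_all

lemma towr_mult:
  assumes A: "towr A" and B: "towr B"
  shows "towr (\<lambda>j t. \<Sum>i=0..j. real (j choose i) * A i t * B (j - i) t)"
  unfolding towr_def
proof (intro allI)
  fix n t
  have sumeq: "(\<Sum>i = 0..n. real (n choose i) * (A (Suc i) t * B (n - i) t + A i t * B (Suc (n - i)) t))
     = (\<Sum>i = 0..Suc n. real (Suc n choose i) * A i t * B (Suc n - i) t)"
    apply (simp add: Suc_choose' algebra_simps sum.distrib)
    apply (subst (4) sum_Suc_reindex)
    apply (auto simp: algebra_simps Suc_diff_le intro: sum.cong)
    done
  have "((\<lambda>t. \<Sum>i=0..n. real (n choose i) * A i t * B (n - i) t) has_real_derivative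
      (\<Sum>i = 0..n. real (n choose i) * (A (Suc i) t * B (n - i) t + A i t * B (Suc (n - i)) t))) (at t)"
    apply (rule DERIV_sum)
    using A B unfolding towr_def
    by (auto intro!: derivative_eq_intros simp: algebra_simps)
  then show "((\<lambda>t. \<Sum>i=0..n. real (n choose i) * A i t * B (n - i) t) has_real_derivative
      (\<Sum>i=0..Suc n. real (Suc n choose i) * A i t * B (Suc n - i) t)) (at t)"
    by (simp add: sumeq)
qed



definition Gf :: "nat \<Rightarrow> real \<Rightarrow> real" where
  "Gf j t = (\<Sum>i=0..j. real (j choose i) * Ff i t * ((-1)^(j-i) * Ff (j-i) (1 - t)))"

lemma Gf_towr: "towr Gf"
  unfolding Gf_def[abs_def] using towr_mult[OF Ff_towr towr_refl[OF Ff_towr]] by simp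

lemma Gf_deriv: "(Gf j has_real_derivative Gf (Suc j) t) (at t)"
  using Gf_towr unfolding towr_def by blast

lemma Gf_cont: "continuous_on A (Gf j)"
  by (meson DERIV_isCont Gf_deriv continuous_at_imp_continuous_on)

lemma Gf_zero: "t \<le> 0 \<or> t \<ge> 1 \<Longrightarrow> Gf j t = 0"
  by (auto simp: Gf_def Ff_zero intro!: sum.neutral)

lemma Gf0: "Gf 0 t = Ff 0 t * Ff 0 (1 - t)"
  by (simp add: Gf_def)

lemma Gf0_nonneg: "Gf 0 t \<ge> 0"
  by (simp add: Gf0 Ff_def)

definition cG :: real where "cG = integral {-1..1} (Gf 0)"

lemma cG_pos: "cG > 0"
proof -
  have "cG \<ge> 0" unfolding cG_def
    by (rule integral_nonneg) (auto intro: integrable_continuous_real Gf_cont Gf0_nonneg)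
  moreover have "cG \<noteq> 0"
  proof
    assume "cG = 0"
    then have "\<forall>x\<in>{-1..1}. Gf 0 x = 0" unfolding cG_def
      using integral_eq_0_iff[of "-1" 1 "Gf 0", OF Gf_cont] Gf0_nonneg by auto
    then have "Gf 0 (1/2) = 0" by auto
    moreover have "Gf 0 (1/2) > 0" unfolding Gf0 using Ff0_pos by simp
    ultimately show False by simp
  qed
  ultimately show ?thesis by simp
qed

lemma integral_Gf_deriv:
  assumes "t > -1"
  shows "((\<lambda>x. integral {-1..x} (Gf 0)) has_real_derivative Gf 0 t) (at t)"
proof -
  have "((\<lambda>x. integral {-1..x} (Gf 0)) has_real_derivative Gf 0 t) (at t within {-1..t+1})"
    by (rule integral_has_real_derivative) (use assms Gf_cont in auto)
  then show ?thesis
    using assms by (subst (asm) at_within_interior) (auto simp: interior_atLeastAtMost_real)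
qed

lemma integral_Gf_low:
  assumes "t \<le> 0"
  shows "integral {-1..t} (Gf 0) = 0"
  by (rule integral_unique[OF has_integral_is_0]) (use assms in \<open>auto simp: Gf_zero\<close>)

lemma integral_Gf_high:
  assumes "t \<ge> 1"
  shows "integral {-1..t} (Gf 0) = cG"
proof -
  have "integral {-1..t} (Gf 0) = integral {-1..1} (Gf 0) + integral {1..t} (Gf 0)"
    using assms Henstock_Kurzweil_Integration.integral_combine[where a="-1" and c=1 and b=t and f="Gf 0"] integrable_continuous_real[OF Gf_cont] by simp
  moreover have "integral {1..t} (Gf 0) = 0"
    by (rule integral_unique[OF has_integral_is_0]) (auto simp: Gf_zero)
  ultimately show ?thesis by (simp add: cG_def)
qed

lemma integral_Gf_le:
  shows "integral {-1..t} (Gf 0) \<le> cG"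
proof (cases "t \<le> 1")
  case True
  show ?thesis
  proof (cases "t \<ge> -1")
    case True2: True
    have "integral {-1..1} (Gf 0) = integral {-1..t} (Gf 0) + integral {t..1} (Gf 0)"
      using True True2 Henstock_Kurzweil_Integration.integral_combine[where a="-1" and c=t and b=1 and f="Gf 0"] integrable_continuous_real[OF Gf_cont] by simp
    moreover have "integral {t..1} (Gf 0) \<ge> 0"
      by (rule integral_nonneg) (auto intro: integrable_continuous_real Gf_cont Gf0_nonneg)
    ultimately show ?thesis by (simp add: cG_def)
  next
    case False
    then show ?thesis using cG_pos integral_Gf_low[of t] by simp
  qed
next
  case False
  then show ?thesis using integral_Gf_high[of t] by simp
qed

definition Eta :: "nat \<Rightarrow> real \<Rightarrow> real" where
  "Eta j t = (case j of 0 \<Rightarrow> 1 - integral {-1..t} (Gf 0) / cG | Suc k \<Rightarrow> - Gf k t / cG)"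

lemma Eta_deriv: "(Eta j has_real_derivative Eta (Suc j) t) (at t)"
proof (cases j)
  case 0
  show ?thesis
  proof (cases "t > -1")
    case True
    show ?thesis unfolding 0 Eta_def
      using cG_pos by (auto intro!: derivative_eq_intros integral_Gf_deriv[OF True])
  next
    case False
    have "((\<lambda>x. 1 - integral {-1..x} (Gf 0) / cG) has_real_derivative 0) (at t)"
      by (rule has_field_derivative_transform_within_open[OF DERIV_const[of 1 "at t"], of "{..<0}"])
         (use False integral_Gf_low in auto)
    then show ?thesis unfolding 0 Eta_def using False Gf_zero[of t 0] by simp
  qed
next
  case (Suc k)
  then show ?thesis unfolding Eta_def
    using cG_pos by (auto intro!: derivative_eq_intros Gf_deriv)
qed

lemma Eta_cont: "continuous_on A (Eta j)"
  by (meson DERIV_isCont Eta_deriv continuous_at_imp_continuous_on)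

lemma Eta0_low: "t \<le> 0 \<Longrightarrow> Eta 0 t = 1"
  by (simp add: Eta_def integral_Gf_low)

lemma Eta0_high: "t \<ge> 1 \<Longrightarrow> Eta 0 t = 0"
proof -
  have "cG \<noteq> 0" using cG_pos by simp
  then show "t \<ge> 1 \<Longrightarrow> Eta 0 t = 0" by (simp add: Eta_def integral_Gf_high)
qed

lemma Eta0_nonneg: "Eta 0 t \<ge> 0"
  using cG_pos integral_Gf_le[of t] by (simp add: Eta_def)

lemma Eta_Suc_zero: "t \<le> 0 \<or> t \<ge> 1 \<Longrightarrow> Eta (Suc j) t = 0"
  by (simp add: Eta_def Gf_zero)

lemma Eta_bounded: "\<exists>B. \<forall>t. \<bar>Eta j t\<bar> \<le> B"
proof -
  have "compact (Eta j ` {0..1})"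
    by (rule compact_continuous_image[OF Eta_cont]) simp
  then obtain B where B: "\<And>y. y \<in> Eta j ` {0..1} \<Longrightarrow> norm y \<le> B"
    using compact_imp_bounded bounded_iff by metis
  show ?thesis
  proof (cases j)
    case 0
    show ?thesis
    proof (rule exI[of _ 1], intro allI)
      fix t
      show "\<bar>Eta j t\<bar> \<le> 1" using 0 Eta0_nonneg[of t] integral_Gf_low[of t] cG_pos
        integral_Gf_le[of t]
      proof -
        have "integral {-1..t} (Gf 0) \<ge> 0"
          by (cases "t \<ge> -1") (auto intro!: integral_nonneg integrable_continuous_real Gf_cont Gf0_nonneg)
        then show ?thesis using 0 Eta0_nonneg[of t] cG_pos by (simp add: Eta_def)
      qed
    qed
  next
    case (Suc k)
    show ?thesis
    proof (rule exI[of _ B], intro allI)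
      fix t
      show "\<bar>Eta j t\<bar> \<le> B"
      proof (cases "t \<in> {0..1}")
        case True then show ?thesis using B[of "Eta j t"] by auto
      next
        case False
        then have "Eta j t = 0" using Suc Eta_Suc_zero[of t k] by auto
        then show ?thesis using B[of "Eta j 0"] by auto
      qed
    qed
  qed
qed

definition EB :: "nat \<Rightarrow> real" where "EB j = (SOME B. \<forall>t. \<bar>Eta j t\<bar> \<le> B)"

lemma EB: "\<bar>Eta j t\<bar> \<le> EB j"
  using someI_ex[OF Eta_bounded[of j]] unfolding EB_def by blast



type_synonym 'n trm = "real \<times> ('n \<Rightarrow> nat) \<times> nat"

definition mnm :: "('n::finite \<Rightarrow> nat) \<Rightarrow> real^'n \<Rightarrow> real" where
  "mnm \<beta> x = (\<Prod>k\<in>UNIV. (x$k) ^ (\<beta> k))"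

definition sq :: "real^'n::finite \<Rightarrow> real" where
  "sq x = (\<Sum>k\<in>UNIV. (x$k)^2)"

definition qq :: "real \<Rightarrow> real \<Rightarrow> real^'n::finite \<Rightarrow> real" where
  "qq r r' x = (sq x - r^2) / (r'^2 - r^2)"

definition evt :: "real \<Rightarrow> real \<Rightarrow> 'n::finite trm \<Rightarrow> real^'n \<Rightarrow> real" where
  "evt r r' tm x = (case tm of (c, \<beta>, j) \<Rightarrow> c * mnm \<beta> x * Eta j (qq r r' x) / (r'^2 - r^2) ^ j)"

definition evl :: "real \<Rightarrow> real \<Rightarrow> 'n::finite trm list \<Rightarrow> real^'n \<Rightarrow> real" where
  "evl r r' ts x = sum_list (map (\<lambda>tm. evt r r' tm x) ts)"

definition dterm :: "'n::finite \<Rightarrow> 'n trm \<Rightarrow> 'n trm list" where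
  "dterm i tm = (case tm of (c, \<beta>, j) \<Rightarrow>
     (if \<beta> i = 0 then [] else [(c * real (\<beta> i), \<beta>(i := \<beta> i - 1), j)]) @ [(2 * c, \<beta>(i := Suc (\<beta> i)), Suc j)])"

definition dlist :: "'n::finite \<Rightarrow> 'n trm list \<Rightarrow> 'n trm list" where
  "dlist i ts = concat (map (dterm i) ts)"

lemma line_comp: "(x + t *\<^sub>R axis i 1) $ k = x $ k + (if k = i then t else 0)"
  by (simp add: axis_def)

lemma sq_line: "sq (x + t *\<^sub>R axis i 1) = sq x + 2 * x$i * t + t^2"
proof -
  have "sq (x + t *\<^sub>R axis i 1) = (\<Sum>k\<in>UNIV. (x$k)^2 + (if k = i then 2 * x$i * t + t^2 else 0))"
    unfolding sq_def line_comp by (intro sum.cong) (auto simp: power2_eq_square algebra_simps)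
  also have "\<dots> = sq x + 2 * x$i * t + t^2"
    by (simp add: sum.distrib sq_def)
  finally show ?thesis .
qed

lemma mnm_split: "mnm \<beta> x = x$i ^ \<beta> i * (\<Prod>k\<in>UNIV - {i}. (x$k) ^ (\<beta> k))"
  unfolding mnm_def by (simp add: prod.remove)

lemma mnm_upd: "mnm (\<beta>(i := v)) x = x$i ^ v * (\<Prod>k\<in>UNIV - {i}. (x$k) ^ (\<beta> k))"
  unfolding mnm_split[of _ _ i] by (auto intro!: prod.cong)

lemma mnm_line: "mnm \<beta> (x + t *\<^sub>R axis i 1) = (x$i + t) ^ \<beta> i * (\<Prod>k\<in>UNIV - {i}. (x$k) ^ (\<beta> k))"
  unfolding mnm_split[of _ _ i] line_comp by (auto intro!: prod.cong)

lemma evt_deriv: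
  assumes "r' > r" "r > 0"
  shows "((\<lambda>t. evt r r' tm (x + t *\<^sub>R axis i 1)) has_real_derivative evl r r' (dterm i tm) x) (at 0)"
proof -
  obtain c \<beta> j where tm: "tm = (c, \<beta>, j)" by (cases tm) auto
  define R where "R = (\<Prod>k\<in>UNIV - {i}. (x$k) ^ (\<beta> k))"
  define D where "D = r'^2 - r^2"
  have D: "D > 0" unfolding D_def using assms by (simp add: power_strict_mono)
  have q: "qq r r' (x + t *\<^sub>R axis i 1) = (sq x + 2 * x$i * t + t^2 - r^2) / D" for t
    unfolding qq_def sq_line D_def ..
  have e: "evt r r' tm (x + t *\<^sub>R axis i 1) =
      c * ((x$i + t) ^ \<beta> i * R) * Eta j ((sq x + 2 * x$i * t + t^2 - r^2) / D) / D ^ j" for t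
    unfolding evt_def tm q mnm_line R_def D_def by simp
  have d1: "((\<lambda>t. Eta j ((sq x + 2 * x$i * t + t^2 - r^2) / D)) has_real_derivative
        Eta (Suc j) ((sq x + 2 * x$i * 0 + 0^2 - r^2) / D) * ((2 * x$i + 2 * 0) / D)) (at 0)"
    by (rule DERIV_chain2[OF Eta_deriv]) (use D in \<open>auto intro!: derivative_eq_intros simp: power2_eq_square\<close>)
  have "((\<lambda>t. c * ((x$i + t) ^ \<beta> i * R) * Eta j ((sq x + 2 * x$i * t + t^2 - r^2) / D) / D ^ j)
      has_real_derivative
      (c * (real (\<beta> i) * x$i ^ (\<beta> i - 1) * R) * Eta j (qq r r' x)
        + c * (x$i ^ \<beta> i * R) * (Eta (Suc j) (qq r r' x) * (2 * x$i / D))) / D ^ j) (at 0)"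
    using d1 D unfolding qq_def D_def[symmetric]
    by (auto intro!: derivative_eq_intros simp: power2_eq_square)
  moreover have "(c * (real (\<beta> i) * x$i ^ (\<beta> i - 1) * R) * Eta j (qq r r' x)
        + c * (x$i ^ \<beta> i * R) * (Eta (Suc j) (qq r r' x) * (2 * x$i / D))) / D ^ j
      = evl r r' (dterm i tm) x"
  proof -
    have a: "x$i ^ \<beta> i * x$i = x$i ^ Suc (\<beta> i)" by simp
    show ?thesis
      unfolding evl_def dterm_def tm evt_def D_def[symmetric]
      using D by (auto simp: field_simps a mnm_upd R_def[symmetric])
  qed
  ultimately show ?thesis unfolding e by simp
qed

lemma evl_deriv:
  assumes "r' > r" "r > 0"
  shows "((\<lambda>t. evl r r' ts (x + t *\<^sub>R axis i 1)) has_real_derivative evl r r' (dlist i ts) x) (at 0)"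
proof (induction ts)
  case Nil
  then show ?case by (simp add: evl_def dlist_def)
next
  case (Cons tm ts)
  have "evl r r' (dlist i (tm # ts)) x = evl r r' (dterm i tm) x + evl r r' (dlist i ts) x"
    by (simp add: evl_def dlist_def)
  moreover have "(\<lambda>t. evl r r' (tm # ts) (x + t *\<^sub>R axis i 1)) =
      (\<lambda>t. evt r r' tm (x + t *\<^sub>R axis i 1) + evl r r' ts (x + t *\<^sub>R axis i 1))"
    by (simp add: evl_def)
  ultimately show ?case using DERIV_add[OF evt_deriv[OF assms] Cons.IH] by simp
qed

lemma dpartial_evl:
  assumes "r' > r" "r > 0"
  shows "dpartial i (evl r r' ts) = evl r r' (dlist i ts)"
  by (rule ext) (simp add: dpartial_def DERIV_imp_deriv[OF evl_deriv[OF assms]])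

definition tm0 :: "'n::finite trm list" where "tm0 = [(1, (\<lambda>_. 0), 0)]"

definition bump :: "real \<Rightarrow> real \<Rightarrow> real^'n::finite \<Rightarrow> real" where
  "bump r r' x = Eta 0 (qq r r' x)"

lemma bump_evl: "bump r r' = evl r r' tm0"
  by (rule ext) (simp add: bump_def evl_def tm0_def evt_def mnm_def)

lemma iter_partial_bump:
  assumes "r' > r" "r > 0"
  shows "iter_partial ds (bump r r') = evl r r' (foldr dlist ds tm0)"
  unfolding iter_partial_def bump_evl
  by (induction ds) (simp_all add: dpartial_evl[OF assms])



lemma sq_norm: "sq x = norm x ^ 2"
  unfolding sq_def norm_vec_def L2_set_def
  by (simp add: sum_nonneg)

lemma EB_nonneg: "EB j \<ge> 0"
  using EB[of j 0] by linarith

lemma Eta_comp_cont[continuous_intros]: "continuous_on S f \<Longrightarrow> continuous_on S (\<lambda>x. Eta j (f x))"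
  by (rule continuous_on_compose2[OF Eta_cont[of UNIV]]) auto

lemma evt_cont: "continuous_on UNIV (evt r r' tm)"
proof -
  obtain c \<beta> j where tm: "tm = (c, \<beta>, j)" by (cases tm) auto
  define a1 where "a1 = c / (r'^2 - r^2) ^ j"
  define a2 where "a2 = 1 / (r'^2 - r^2)"
  have e: "evt r r' tm = (\<lambda>x. a1 * (mnm \<beta> x * Eta j ((sq x - r^2) * a2)))"
    by (rule ext) (simp add: evt_def tm qq_def a1_def a2_def divide_inverse mult_ac)
  show ?thesis unfolding e mnm_def sq_def
    by (intro continuous_intros)
qed

lemma evl_cont: "continuous_on UNIV (evl r r' ts)"
proof (induction ts)
  case Nil
  then show ?case by (simp add: evl_def[abs_def])
next
  case (Cons a ts)
  have "evl r r' (a # ts) = (\<lambda>x. evt r r' a x + evl r r' ts x)"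
    by (simp add: evl_def[abs_def])
  then show ?case using continuous_on_add[OF evt_cont Cons.IH] by simp
qed

lemma sum_upd: "sum ((\<beta>::'n::finite \<Rightarrow> nat)(i := v)) UNIV + \<beta> i = sum \<beta> UNIV + (v::nat)"
proof -
  have "sum (\<beta>(i := v)) UNIV = v + sum (\<beta>(i := v)) (UNIV - {i})"
    using sum.remove[of UNIV i "\<beta>(i := v)"] by simp
  moreover have "sum \<beta> UNIV = \<beta> i + sum \<beta> (UNIV - {i})"
    by (simp add: sum.remove)
  moreover have "sum (\<beta>(i := v)) (UNIV - {i}) = sum \<beta> (UNIV - {i})"
    by (intro sum.cong) auto
  ultimately show ?thesis by simp
qed

definition inv_ok :: "nat \<Rightarrow> 'n::finite trm \<Rightarrow> bool" where
  "inv_ok k tm = (case tm of (c, \<beta>, j) \<Rightarrow> 2 * j = sum \<beta> UNIV + k \<and> j \<le> k)"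

lemma inv_dterm:
  fixes tm :: "'n::finite trm"
  assumes "inv_ok k tm" "tm' \<in> set (dterm i tm)"
  shows "inv_ok (Suc k) tm'"
proof -
  obtain c \<beta> j where tm: "tm = (c, \<beta>, j)" by (cases tm) auto
  have inv: "2 * j = sum \<beta> UNIV + k" "j \<le> k" using assms(1) by (auto simp: inv_ok_def tm)
  have s1: "sum (\<beta>(i := \<beta> i - 1)) UNIV + \<beta> i = sum \<beta> UNIV + (\<beta> i - 1)" by (rule sum_upd)
  have s2: "sum (\<beta>(i := Suc (\<beta> i))) UNIV + \<beta> i = sum \<beta> UNIV + Suc (\<beta> i)" by (rule sum_upd)
  from assms(2) consider "\<beta> i > 0" "tm' = (c * real (\<beta> i), \<beta>(i := \<beta> i - 1), j)"
    | "tm' = (2 * c, \<beta>(i := Suc (\<beta> i)), Suc j)"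
    by (auto simp: dterm_def tm split: if_splits)
  then show ?thesis
  proof cases
    case 1
    then show ?thesis using inv s1 by (simp add: inv_ok_def)
  next
    case 2
    then show ?thesis using inv s2 by (simp add: inv_ok_def)
  qed
qed

lemma inv_foldr: "tm \<in> set (foldr dlist ds tm0) \<Longrightarrow> inv_ok (length ds) tm"
proof (induction ds arbitrary: tm)
  case Nil
  then show ?case by (simp add: tm0_def inv_ok_def)
next
  case (Cons i ds)
  have "tm \<in> set (concat (map (dterm i) (foldr dlist ds tm0)))"
    using Cons.prems by (simp add: dlist_def[of i])
  then obtain tm1 where "tm1 \<in> set (foldr dlist ds tm0)" "tm \<in> set (dterm i tm1)"
    by auto
  then show ?case using Cons.IH inv_dterm by fastforce
qed

lemma qq_le0: assumes "0 < r" "r < r'" "norm x \<le> r" shows "qq r r' x \<le> 0"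
proof -
  have "sq x \<le> r^2" unfolding sq_norm using assms by (simp add: power_mono)
  moreover have "r'^2 - r^2 > 0" using assms by (simp add: power_strict_mono)
  ultimately show ?thesis unfolding qq_def by (simp add: divide_nonpos_pos)
qed

lemma qq_ge1: assumes "0 < r" "r < r'" "norm x \<ge> r'" shows "qq r r' x \<ge> 1"
proof -
  have "sq x \<ge> r'^2" unfolding sq_norm using assms by (simp add: power_mono)
  moreover have "r'^2 - r^2 > 0" using assms by (simp add: power_strict_mono)
  ultimately show ?thesis unfolding qq_def by simp
qed

lemma qq_lt1: assumes "0 < r" "r < r'" "qq r r' x < 1" shows "norm x < r'"
  using qq_ge1[OF assms(1,2), of x] assms(3) by linarith

lemma evt_zero:
  assumes "0 < r" "r < r'" "inv_ok k tm" "k \<ge> 1" "norm x \<le> r \<or> norm x \<ge> r'"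
  shows "evt r r' tm x = 0"
proof -
  obtain c \<beta> j where tm: "tm = (c, \<beta>, j)" by (cases tm) auto
  have "j \<ge> 1" using assms(3,4) by (auto simp: inv_ok_def tm)
  then obtain j' where j: "j = Suc j'" by (cases j) auto
  have "qq r r' x \<le> 0 \<or> qq r r' x \<ge> 1" using assms qq_le0 qq_ge1 by blast
  then show ?thesis by (simp add: evt_def tm j Eta_Suc_zero)
qed

lemma evl_zero:
  assumes "0 < r" "r < r'" "\<forall>tm\<in>set ts. inv_ok k tm" "k \<ge> 1" "norm x \<le> r \<or> norm x \<ge> r'"
  shows "evl r r' ts x = 0"
  using assms(3)
proof (induction ts)
  case Nil
  then show ?case by (simp add: evl_def)
next
  case (Cons tm ts)
  have "evt r r' tm x = 0" using evt_zero[OF assms(1,2) _ assms(4,5)] Cons.prems by simp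
  then show ?case using Cons by (simp add: evl_def)
qed

lemma abs_mnm: assumes "norm x \<le> R" shows "\<bar>mnm \<beta> x\<bar> \<le> R ^ sum \<beta> UNIV"
proof -
  have "\<bar>mnm \<beta> x\<bar> = (\<Prod>k\<in>UNIV. \<bar>x$k\<bar> ^ \<beta> k)"
    by (simp add: mnm_def abs_prod power_abs)
  also have "\<dots> \<le> (\<Prod>k\<in>UNIV. R ^ \<beta> k)"
    by (intro prod_mono) (auto intro!: power_mono component_le_norm_cart[THEN order_trans] assms)
  also have "\<dots> = R ^ sum \<beta> UNIV"
    by (simp add: power_sum)
  finally show ?thesis .
qed

definition wt :: "'n::finite trm \<Rightarrow> real" where
  "wt tm = (case tm of (c, \<beta>, j) \<Rightarrow> \<bar>c\<bar> * EB j)"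

lemma evt_bound:
  assumes "0 < r" "r < r'" "inv_ok k tm" "k \<ge> 1"
  shows "\<bar>evt r r' tm x\<bar> \<le> wt tm / (r' - r) ^ k"
proof -
  obtain c \<beta> j where tm: "tm = (c, \<beta>, j)" by (cases tm) auto
  have inv: "2 * j = sum \<beta> UNIV + k" "j \<le> k" using assms(3) by (auto simp: inv_ok_def tm)
  have "j \<ge> 1" using inv assms(4) by auto
  then obtain j' where j: "j = Suc j'" by (cases j) auto
  define \<delta> where "\<delta> = r' - r"
  define D where "D = r'^2 - r^2"
  have \<delta>: "\<delta> > 0" "\<delta> \<le> r'" using assms by (auto simp: \<delta>_def)
  have DD: "D \<ge> \<delta> * r'" unfolding D_def \<delta>_def using assms by (simp add: power2_eq_square algebra_simps)
  have Dpos: "D > 0" using DD \<delta> assms by (smt (verit) mult_pos_pos)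
  show ?thesis
  proof (cases "Eta j (qq r r' x) = 0")
    case True
    then show ?thesis using EB_nonneg[of j] \<delta> by (simp add: evt_def tm wt_def \<delta>_def)
  next
    case False
    then have "qq r r' x < 1" using Eta_Suc_zero[of "qq r r' x" j'] j by force
    then have nx: "norm x \<le> r'" using qq_lt1[OF assms(1,2)] by force
    have m: "\<bar>mnm \<beta> x\<bar> \<le> r' ^ sum \<beta> UNIV" by (rule abs_mnm[OF nx])
    have key: "r' ^ sum \<beta> UNIV * \<delta> ^ k \<le> D ^ j"
    proof -
      have "\<delta> ^ k = \<delta> ^ (k - j) * \<delta> ^ j" using inv by (simp add: power_add[symmetric])
      also have "\<dots> \<le> r' ^ (k - j) * \<delta> ^ j"
        using \<delta> by (intro mult_right_mono power_mono) auto
      finally have "r' ^ sum \<beta> UNIV * \<delta> ^ k \<le> r' ^ sum \<beta> UNIV * (r' ^ (k - j) * \<delta> ^ j)"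
        using assms by (intro mult_left_mono) auto
      also have "\<dots> = r' ^ (sum \<beta> UNIV + (k - j)) * \<delta> ^ j"
        by (simp add: power_add)
      also have "\<dots> = (\<delta> * r') ^ j"
      proof -
        have "sum \<beta> UNIV + (k - j) = j" using inv by arith
        then show ?thesis by (simp add: power_mult_distrib mult.commute)
      qed
      also have "\<dots> \<le> D ^ j"
        using DD \<delta> assms by (intro power_mono) auto
      finally show ?thesis .
    qed
    have "\<bar>evt r r' tm x\<bar> = \<bar>c\<bar> * \<bar>mnm \<beta> x\<bar> * \<bar>Eta j (qq r r' x)\<bar> / D ^ j"
      using Dpos by (simp add: evt_def tm D_def[symmetric] abs_mult)
    also have "\<dots> \<le> \<bar>c\<bar> * r' ^ sum \<beta> UNIV * EB j / D ^ j"
      using Dpos m EB[of j] by (intro divide_right_mono mult_mono) auto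
    also have "\<dots> \<le> \<bar>c\<bar> * EB j / \<delta> ^ k"
    proof -
      have "\<bar>c\<bar> * r' ^ sum \<beta> UNIV * EB j * \<delta> ^ k \<le> \<bar>c\<bar> * EB j * D ^ j"
        using key EB_nonneg[of j] by (simp add: mult.assoc mult_left_mono mult.left_commute)
      then show ?thesis using Dpos \<delta> by (simp add: field_simps)
    qed
    finally show ?thesis by (simp add: wt_def tm \<delta>_def)
  qed
qed

definition wtl :: "'n::finite trm list \<Rightarrow> real" where
  "wtl ts = sum_list (map wt ts)"

lemma evl_bound:
  assumes "0 < r" "r < r'" "\<forall>tm\<in>set ts. inv_ok k tm" "k \<ge> 1"
  shows "\<bar>evl r r' ts x\<bar> \<le> wtl ts / (r' - r) ^ k"
  using assms(3)
proof (induction ts)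
  case Nil
  then show ?case by (simp add: evl_def wtl_def)
next
  case (Cons tm ts)
  have "\<bar>evl r r' (tm # ts) x\<bar> \<le> \<bar>evt r r' tm x\<bar> + \<bar>evl r r' ts x\<bar>"
    by (simp add: evl_def)
  also have "\<dots> \<le> wt tm / (r' - r) ^ k + wtl ts / (r' - r) ^ k"
  proof (rule add_mono)
    have "inv_ok k tm" using Cons.prems by simp
    then show "\<bar>evt r r' tm x\<bar> \<le> wt tm / (r' - r) ^ k" by (rule evt_bound[OF assms(1,2) _ assms(4)])
    show "\<bar>evl r r' ts x\<bar> \<le> wtl ts / (r' - r) ^ k" using Cons by simp
  qed
  finally show ?case by (simp add: wtl_def add_divide_distrib)
qed

lemma test_fun_bump:
  assumes "0 < r" "r < r'"
  shows "test_fun (bump r r' :: real^'n::finite \<Rightarrow> real)"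
  unfolding test_fun_def
proof (intro conjI allI)
  fix ds :: "'n list"
  show "continuous_on UNIV (iter_partial ds (bump r r' :: real^'n \<Rightarrow> real))"
    unfolding iter_partial_bump[OF assms(2,1)] by (rule evl_cont)
  fix x :: "real^'n" and i
  show "(\<lambda>t. iter_partial ds (bump r r') (x + t *\<^sub>R axis i 1)) differentiable at 0"
    unfolding iter_partial_bump[OF assms(2,1)]
    using evl_deriv[OF assms(2,1)] real_differentiable_def by blast
next
  have "{x :: real^'n. bump r r' x \<noteq> 0} \<subseteq> cball 0 r'"
    using Eta0_high qq_ge1[OF assms] by (force simp: bump_def)
  then show "bounded {x :: real^'n. bump r r' x \<noteq> 0}"
    using bounded_cball bounded_subset by blast
qed

lemma bump_nonneg: "bump r r' x \<ge> 0"
  by (simp add: bump_def Eta0_nonneg)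

lemma bump_one: "0 < r \<Longrightarrow> r < r' \<Longrightarrow> norm x \<le> r \<Longrightarrow> bump r r' x = 1"
  by (simp add: bump_def Eta0_low qq_le0)

lemma bump_zero: "0 < r \<Longrightarrow> r < r' \<Longrightarrow> norm x \<ge> r' \<Longrightarrow> bump r r' x = 0"
  by (simp add: bump_def Eta0_high qq_ge1)

definition KK :: "nat \<Rightarrow> 'n::finite itself \<Rightarrow> real" where
  "KK m _ = (\<Sum>ds\<in>{ds :: 'n list. set ds \<subseteq> UNIV \<and> length ds = m}. wtl (foldr dlist ds tm0))"

lemma wtl_nonneg: "wtl ts \<ge> 0"
  unfolding wtl_def by (induction ts) (auto simp: wt_def EB_nonneg)

lemma iter_bump_bound:
  fixes ds :: "'n::finite list"
  assumes "0 < r" "r < r'" "length ds = m" "m \<ge> 1"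
  shows "\<bar>iter_partial ds (bump r r') x\<bar> \<le> KK m TYPE('n) / (r' - r) ^ m"
proof -
  have "\<bar>iter_partial ds (bump r r') x\<bar> \<le> wtl (foldr dlist ds tm0) / (r' - r) ^ m"
    unfolding iter_partial_bump[OF assms(2,1)]
    using evl_bound[OF assms(1,2), of "foldr dlist ds tm0" m] inv_foldr[of _ ds] assms(3,4) by auto
  also have "\<dots> \<le> KK m TYPE('n) / (r' - r) ^ m"
    unfolding KK_def using assms
    using finite_lists_length_eq[of "UNIV::'n set" m]
    by (intro divide_right_mono member_le_sum) (auto intro: wtl_nonneg)
  finally show ?thesis .
qed

lemma iter_bump_zero:
  fixes ds :: "'n::finite list"
  assumes "0 < r" "r < r'" "length ds \<ge> 1" "norm x \<le> r \<or> norm x \<ge> r'"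
  shows "iter_partial ds (bump r r') x = 0"
  unfolding iter_partial_bump[OF assms(2,1)]
  using evl_zero[OF assms(1,2), of "foldr dlist ds tm0" "length ds"] inv_foldr[of _ ds] assms(3,4) by auto



lemma holder_nn:
  fixes f g :: "'a \<Rightarrow> real"
  assumes pq: "p > 1" "q > 1" "1/p + 1/q = 1"
    and meas: "f \<in> borel_measurable M" "g \<in> borel_measurable M"
    and nn: "\<And>x. f x \<ge> 0" "\<And>x. g x \<ge> 0"
    and A: "(\<integral>\<^sup>+ x. ennreal (f x powr p) \<partial>M) = ennreal A" "A \<ge> 0"
    and B: "(\<integral>\<^sup>+ x. ennreal (g x powr q) \<partial>M) = ennreal B" "B \<ge> 0"
  shows "(\<integral>\<^sup>+ x. ennreal (f x * g x) \<partial>M) \<le> ennreal (A powr (1/p) * B powr (1/q))"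
proof (cases "A = 0 \<or> B = 0")
  case True
  then show ?thesis
  proof
    assume "A = 0"
    then have "AE x in M. ennreal (f x powr p) = 0"
      using A by (subst nn_integral_0_iff_AE[symmetric]) (use meas in auto)
    then have "AE x in M. ennreal (f x * g x) = 0"
      by (eventually_elim) (use nn in auto)
    then have "(\<integral>\<^sup>+ x. ennreal (f x * g x) \<partial>M) = 0"
      by (simp add: nn_integral_cong_AE)
    then show ?thesis by simp
  next
    assume "B = 0"
    then have "AE x in M. ennreal (g x powr q) = 0"
      using B by (subst nn_integral_0_iff_AE[symmetric]) (use meas in auto)
    then have "AE x in M. ennreal (f x * g x) = 0"
      by (eventually_elim) (use nn in auto)
    then have "(\<integral>\<^sup>+ x. ennreal (f x * g x) \<partial>M) = 0"
      by (simp add: nn_integral_cong_AE)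
    then show ?thesis by simp
  qed
next
  case False
  then have Ap: "A > 0" and Bp: "B > 0" using A B by auto
  define \<alpha> where "\<alpha> = A powr (1/p)"
  define \<beta> where "\<beta> = B powr (1/q)"
  have \<alpha>: "\<alpha> > 0" "\<alpha> powr p = A" using Ap pq by (auto simp: \<alpha>_def powr_powr)
  have \<beta>: "\<beta> > 0" "\<beta> powr q = B" using Bp pq by (auto simp: \<beta>_def powr_powr)
  have pt: "f x * g x \<le> (\<alpha> * \<beta> / (A * p)) * f x powr p + (\<alpha> * \<beta> / (B * q)) * g x powr q" for x
  proof -
    have "(f x / \<alpha>) * (g x / \<beta>) \<le> (f x / \<alpha>) powr p / p + (g x / \<beta>) powr q / q"
      by (rule Youngs_inequality) (use pq nn \<alpha> \<beta> in auto)
    also have "\<dots> = f x powr p / (A * p) + g x powr q / (B * q)"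
      using \<alpha> \<beta> nn by (simp add: powr_divide)
    finally have "(f x / \<alpha>) * (g x / \<beta>) \<le> f x powr p / (A * p) + g x powr q / (B * q)" .
    then have "\<alpha> * \<beta> * ((f x / \<alpha>) * (g x / \<beta>)) \<le> \<alpha> * \<beta> * (f x powr p / (A * p) + g x powr q / (B * q))"
      using \<alpha> \<beta> by (intro mult_left_mono) auto
    then show ?thesis using \<alpha> \<beta> by (simp add: field_simps)
  qed
  have "(\<integral>\<^sup>+ x. ennreal (f x * g x) \<partial>M) \<le>
      (\<integral>\<^sup>+ x. ennreal (\<alpha> * \<beta> / (A * p)) * ennreal (f x powr p) + ennreal (\<alpha> * \<beta> / (B * q)) * ennreal (g x powr q) \<partial>M)"
    using pt \<alpha> \<beta> Ap Bp pq
    by (intro nn_integral_mono) (auto simp: ennreal_mult[symmetric] ennreal_plus[symmetric] simp del: ennreal_plus)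
  also have "\<dots> = ennreal (\<alpha> * \<beta> / (A * p)) * ennreal A + ennreal (\<alpha> * \<beta> / (B * q)) * ennreal B"
    using meas by (simp add: nn_integral_add nn_integral_cmult A B)
  also have "\<dots> = ennreal (\<alpha> * \<beta> * (1/p + 1/q))"
    using \<alpha> \<beta> Ap Bp pq
    by (simp add: ennreal_mult[symmetric] ennreal_plus[symmetric] field_simps del: ennreal_plus)
  also have "\<dots> = ennreal (A powr (1/p) * B powr (1/q))"
    using pq by (simp add: \<alpha>_def \<beta>_def)
  finally show ?thesis .
qed



lemma mindices_ds:
  fixes \<alpha> :: "'n::finite \<Rightarrow> nat"
  assumes "\<alpha> \<in> mindices m"
  shows "\<exists>ds. mpartial \<alpha> f = iter_partial ds f \<and> length ds = m"
proof -
  define M where "M = (\<Sum>i\<in>(UNIV::'n set). replicate_mset (\<alpha> i) i)"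
  have cM: "count M i = \<alpha> i" for i
    unfolding M_def count_sum by (simp add: count_replicate_mset)
  obtain xs where "mset xs = M" using ex_mset by blast
  then have ex: "\<exists>ds. \<forall>i. count (mset ds) i = \<alpha> i" using cM by auto
  define ds where "ds = (SOME ds. \<forall>i. count (mset ds) i = \<alpha> i)"
  have ds: "\<forall>i. count (mset ds) i = \<alpha> i" unfolding ds_def by (rule someI_ex[OF ex])
  have "length ds = size (mset ds)" by simp
  also have "\<dots> = sum (count (mset ds)) (set_mset (mset ds))"
    by (rule size_multiset_overloaded_eq)
  also have "\<dots> = sum (count (mset ds)) UNIV"
    by (intro sum.mono_neutral_left) auto
  also have "\<dots> = m" using ds assms by (simp add: mindices_def)
  finally show ?thesis unfolding mpartial_def ds_def[symmetric] by blast
qed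

lemma cont_lebesgue_meas: "continuous_on UNIV f \<Longrightarrow> f \<in> borel_measurable lebesgue"
  using continuous_imp_measurable_on_sets_lebesgue[of UNIV f] by (simp add: lebesgue_on_UNIV_eq)



lemma key_est:
  fixes aa :: "('n::finite \<Rightarrow> nat) \<Rightarrow> real^'n \<Rightarrow> real \<Rightarrow> real"
    and a b u :: "real^'n \<Rightarrow> real" and r r' lam IA :: real
  assumes bpos: "\<forall>x. b x > 0" and bm: "b \<in> borel_measurable lebesgue"
    and apos: "\<forall>x. a x > 0" and am: "a \<in> borel_measurable lebesgue"
    and AEb: "AE x in lebesgue. \<forall>\<zeta> \<alpha>. \<alpha> \<in> mindices m \<longrightarrow> \<bar>aa \<alpha> x \<zeta>\<bar> \<le> a x * \<bar>\<zeta>\<bar>"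
    and sol: "is_solution m lam aa b u"
    and m: "m \<ge> 1" and lam: "lam > 1" and r: "0 < r" "r < r'"
    and IA: "(\<integral>\<^sup>+ x \<in> ball 0 r' - ball 0 r.
                 ennreal (a x powr (lam / (lam - 1)) * b x powr (- 1 / (lam - 1))) \<partial>lebesgue) = ennreal IA"
    and IA0: "IA \<ge> 0"
  shows "Jfun lam b u r \<le> real (card (mindices m :: ('n \<Rightarrow> nat) set)) * KK m TYPE('n) / (r' - r) ^ m
           * (Jfun lam b u r' - Jfun lam b u r) powr (1 / lam) * IA powr ((lam - 1) / lam)"
proof -
  define f where "f x = b x * \<bar>u x\<bar> powr lam" for x
  define A where "A = ball (0::real^'n) r' - ball 0 r"
  define \<phi> where "\<phi> = (bump r r' :: real^'n \<Rightarrow> real)"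
  define K where "K = KK m TYPE('n)"
  define N where "N = real (card (mindices m :: ('n \<Rightarrow> nat) set))"
  define c0 where "c0 = N * K / (r' - r) ^ m"
  define q where "q = lam / (lam - 1)"
  define D1 where "D1 = Jfun lam b u r' - Jfun lam b u r"
  have fnn: "f x \<ge> 0" for x using bpos by (simp add: f_def less_imp_le)
  have LI: "loc_integrable f" and LA: "\<forall>\<alpha>\<in>mindices m. loc_integrable (\<lambda>x. aa \<alpha> x (u x))"
    and SOL: "\<And>\<psi>. test_fun \<psi> \<Longrightarrow> (\<forall>x. \<psi> x \<ge> 0) \<Longrightarrow>
        (\<integral>x. (\<Sum>\<alpha>\<in>mindices m. aa \<alpha> x (u x) * mpartial \<alpha> \<psi> x) \<partial>lebesgue) \<ge> (\<integral>x. f x * \<psi> x \<partial>lebesgue)"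
    using sol unfolding is_solution_def f_def by auto
  have intC: "integrable lebesgue (\<lambda>x. indicator (cball 0 r') x * f x)"
    using LI unfolding loc_integrable_def set_integrable_def by simp
  have intB: "integrable lebesgue (\<lambda>x. indicator (ball 0 s) x * f x)" if "s \<le> r'" for s
  proof -
    have "set_integrable lebesgue (ball 0 s) f"
      by (rule set_integrable_subset[of _ "cball 0 r'"]) (use LI that in \<open>auto simp: loc_integrable_def\<close>)
    then show ?thesis by (simp add: set_integrable_def)
  qed
  have J_eq: "Jfun lam b u s = (\<integral>x. indicator (ball 0 s) x * f x \<partial>lebesgue)" for s
    by (simp add: Jfun_def set_lebesgue_integral_def f_def)
  have phim: "\<phi> \<in> borel_measurable lebesgue"
  proof -
    have "continuous_on UNIV (iter_partial [] (bump r r' :: real^'n \<Rightarrow> real))"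
      using test_fun_bump[OF r] unfolding test_fun_def by blast
    then show ?thesis unfolding \<phi>_def by (intro cont_lebesgue_meas) (simp add: iter_partial_def)
  qed
  have phi_supp: "\<phi> x = indicator (cball 0 r') x * \<phi> x" for x
    using bump_zero[OF r, of x] by (auto simp: \<phi>_def indicator_def)
  have S1: "Jfun lam b u r \<le> (\<integral>x. f x * \<phi> x \<partial>lebesgue)"
  proof -
    have int2: "integrable lebesgue (\<lambda>x. f x * \<phi> x)"
    proof (rule Bochner_Integration.integrable_bound[OF integrable_mult_right[OF intC, of "EB 0"]])
      have "(\<lambda>x. f x * \<phi> x) = (\<lambda>x. (indicator (cball 0 r') x * f x) * \<phi> x)"
        by (rule ext) (metis phi_supp mult.commute mult.left_commute)
      then show "(\<lambda>x. f x * \<phi> x) \<in> borel_measurable lebesgue"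
        using borel_measurable_integrable[OF intC] phim by simp
      show "AE x in lebesgue. norm (f x * \<phi> x) \<le> norm (EB 0 * (indicator (cball 0 r') x * f x))"
      proof (intro AE_I2)
        fix x
        have "\<bar>\<phi> x\<bar> \<le> EB 0" using EB[of 0] by (simp add: \<phi>_def bump_def)
        then have "\<bar>f x\<bar> * \<bar>\<phi> x\<bar> \<le> \<bar>f x\<bar> * EB 0" by (intro mult_left_mono) auto
        then show "norm (f x * \<phi> x) \<le> norm (EB 0 * (indicator (cball 0 r') x * f x))"
          using phi_supp[of x] EB_nonneg[of 0] by (auto simp: indicator_def abs_mult mult.commute)
      qed
    qed
    show ?thesis unfolding J_eq
    proof (rule integral_mono[OF intB int2])
      fix x
      show "indicator (ball 0 r) x * f x \<le> f x * \<phi> x"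
        using bump_one[OF r, of x] bump_nonneg[of r r' x] fnn[of x]
        by (auto simp: indicator_def \<phi>_def)
    qed (use r in auto)
  qed
  define G where "G x = (\<Sum>\<alpha>\<in>mindices m. aa \<alpha> x (u x) * mpartial \<alpha> \<phi> x)" for x
  have S2: "(\<integral>x. f x * \<phi> x \<partial>lebesgue) \<le> (\<integral>x. G x \<partial>lebesgue)"
    unfolding G_def \<phi>_def using SOL[OF test_fun_bump[OF r]] bump_nonneg by blast
  have mp_bound: "\<bar>mpartial \<alpha> \<phi> x\<bar> \<le> K / (r' - r) ^ m * indicator A x" if al: "\<alpha> \<in> mindices m" for \<alpha> :: "'n \<Rightarrow> nat" and x
  proof -
    obtain ds where ds: "mpartial \<alpha> \<phi> = iter_partial ds \<phi>" "length ds = m"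
      using mindices_ds[OF al] by blast
    show ?thesis
    proof (cases "x \<in> A")
      case True
      then show ?thesis using iter_bump_bound[OF r ds(2) m, of x] ds(1) by (simp add: \<phi>_def K_def)
    next
      case False
      then have nx: "norm x \<le> r \<or> norm x \<ge> r'" by (auto simp: A_def)
      have "iter_partial ds (bump r r') x = 0" by (rule iter_bump_zero[OF r _ nx]) (use ds m in simp)
      then show ?thesis using ds False by (simp add: \<phi>_def)
    qed
  qed
  define f1 where "f1 x = (f x * indicator A x) powr (1 / lam)" for x
  define g1 where "g1 x = a x * b x powr (- 1 / lam) * indicator A x" for x
  have fg1: "f1 x * g1 x = a x * \<bar>u x\<bar> * indicator A x" for x
  proof (cases "x \<in> A")
    case True
    have "f1 x = b x powr (1 / lam) * \<bar>u x\<bar>"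
      using True bpos lam by (simp add: f1_def f_def powr_mult powr_powr)
    then have "f1 x * g1 x = a x * \<bar>u x\<bar> * (b x powr (1 / lam) * b x powr (- 1 / lam))"
      using True by (simp add: g1_def)
    also have "b x powr (1 / lam) * b x powr (- 1 / lam) = 1"
      using bpos[rule_format, of x] by (simp add: powr_add[symmetric])
    finally show ?thesis using True by simp
  next
    case False
    then show ?thesis by (simp add: f1_def g1_def)
  qed
  have S3: "AE x in lebesgue. ennreal (G x) \<le> ennreal (c0 * (f1 x * g1 x))"
    using AEb
  proof eventually_elim
    case (elim x)
    have "G x \<le> (\<Sum>\<alpha>\<in>mindices m. \<bar>aa \<alpha> x (u x) * mpartial \<alpha> \<phi> x\<bar>)"
      unfolding G_def by (rule order_trans[OF _ sum_abs]) simp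
    also have "\<dots> \<le> (\<Sum>\<alpha>\<in>(mindices m :: ('n \<Rightarrow> nat) set). (a x * \<bar>u x\<bar>) * (K / (r' - r) ^ m * indicator A x))"
      unfolding abs_mult
    proof (intro sum_mono)
      fix \<alpha> :: "'n \<Rightarrow> nat" assume al: "\<alpha> \<in> mindices m"
      have ax: "a x > 0" using apos by simp
      show "\<bar>aa \<alpha> x (u x)\<bar> * \<bar>mpartial \<alpha> \<phi> x\<bar> \<le> (a x * \<bar>u x\<bar>) * (K / (r' - r) ^ m * indicator A x)"
        by (rule mult_mono) (use elim al mp_bound[OF al] ax in auto)
    qed
    also have "\<dots> = c0 * (f1 x * g1 x)"
      by (simp add: fg1 c0_def N_def mult_ac)
    finally show ?case by (rule ennreal_leI)
  qed
  have indA: "(indicator A x :: real) = indicator (cball 0 r') x * indicator A x" for x :: "real^'n"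
    by (auto simp: indicator_def A_def)
  have Asets: "A \<in> sets lebesgue" unfolding A_def by auto
  have fAm: "(\<lambda>x. f x * indicator A x) \<in> borel_measurable lebesgue"
  proof -
    have "(\<lambda>x. f x * indicator A x) = (\<lambda>x. (indicator (cball 0 r') x * f x) * indicator A x)"
      by (rule ext) (metis indA mult.commute mult.left_commute)
    then show ?thesis using borel_measurable_integrable[OF intC] Asets
      by (auto intro!: borel_measurable_times borel_measurable_indicator)
  qed
  have f1m: "f1 \<in> borel_measurable lebesgue"
    unfolding f1_def[abs_def] using fAm by measurable
  have g1m: "g1 \<in> borel_measurable lebesgue"
    unfolding g1_def[abs_def] using am bm Asets
    by (auto intro!: borel_measurable_times borel_measurable_indicator powr_real_measurable)
  have intA: "integrable lebesgue (\<lambda>x. f x * indicator A x)"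
  proof -
    have "(\<lambda>x. f x * indicator A x) = (\<lambda>x. indicator (ball 0 r') x * f x - indicator (ball 0 r) x * f x)"
      using r by (auto simp: A_def indicator_def fun_eq_iff)
    then show ?thesis using intB[of r'] intB[of r] r by simp
  qed
  have D1eq: "D1 = (\<integral>x. f x * indicator A x \<partial>lebesgue)"
  proof -
    have "(\<lambda>x. f x * indicator A x) = (\<lambda>x. indicator (ball 0 r') x * f x - indicator (ball 0 r) x * f x)"
      using r by (auto simp: A_def indicator_def fun_eq_iff)
    then show ?thesis unfolding D1_def J_eq using intB[of r'] intB[of r] r by simp
  qed
  have D1nn: "D1 \<ge> 0" unfolding D1eq by (rule integral_nonneg_AE) (simp add: fnn)
  have Hf: "(\<integral>\<^sup>+ x. ennreal (f1 x powr lam) \<partial>lebesgue) = ennreal D1"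
  proof -
    have "f1 x powr lam = f x * indicator A x" for x
      using lam fnn[of x] by (simp add: f1_def powr_powr)
    then have "(\<integral>\<^sup>+ x. ennreal (f1 x powr lam) \<partial>lebesgue) = (\<integral>\<^sup>+ x. ennreal (f x * indicator A x) \<partial>lebesgue)"
      by simp
    also have "\<dots> = ennreal D1" unfolding D1eq
      by (rule nn_integral_eq_integral[OF intA]) (simp add: fnn)
    finally show ?thesis .
  qed
  have Hg: "(\<integral>\<^sup>+ x. ennreal (g1 x powr q) \<partial>lebesgue) = ennreal IA"
  proof -
    have "g1 x powr q = a x powr (lam / (lam - 1)) * b x powr (- 1 / (lam - 1)) * indicator A x" for x
    proof (cases "x \<in> A")
      case True
      have "g1 x powr q = a x powr q * (b x powr (- 1 / lam)) powr q"
        using True apos bpos by (simp add: g1_def powr_mult)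
      also have "(b x powr (- 1 / lam)) powr q = b x powr (- 1 / (lam - 1))"
        using lam by (simp add: powr_powr q_def)
      finally show ?thesis using True by (simp add: q_def)
    next
      case False
      then show ?thesis by (simp add: g1_def)
    qed
    then have "(\<integral>\<^sup>+ x. ennreal (g1 x powr q) \<partial>lebesgue) =
       (\<integral>\<^sup>+ x \<in> A. ennreal (a x powr (lam / (lam - 1)) * b x powr (- 1 / (lam - 1))) \<partial>lebesgue)"
      by (intro nn_integral_cong) (simp add: indicator_def)
    then show ?thesis using IA by (simp add: A_def)
  qed
  have Hol: "(\<integral>\<^sup>+ x. ennreal (f1 x * g1 x) \<partial>lebesgue) \<le> ennreal (D1 powr (1 / lam) * IA powr (1 / q))"
  proof (rule holder_nn[OF lam _ _ f1m g1m _ _ Hf D1nn Hg IA0])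
    show "q > 1" using lam by (simp add: q_def)
    show "1 / lam + 1 / q = 1" using lam by (simp add: q_def field_simps)
    show "f1 x \<ge> 0" for x by (simp add: f1_def)
    show "g1 x \<ge> 0" for x using apos[rule_format, of x] by (simp add: g1_def)
  qed
  have "K \<ge> 0" unfolding K_def KK_def by (intro sum_nonneg wtl_nonneg)
  then have c0nn: "c0 \<ge> 0" using r unfolding c0_def N_def by simp
  have "(\<integral>\<^sup>+ x. ennreal (G x) \<partial>lebesgue) \<le> (\<integral>\<^sup>+ x. ennreal c0 * ennreal (f1 x * g1 x) \<partial>lebesgue)"
    using S3 by (intro nn_integral_mono_AE) (simp add: ennreal_mult' c0nn)
  also have "\<dots> = ennreal c0 * (\<integral>\<^sup>+ x. ennreal (f1 x * g1 x) \<partial>lebesgue)"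
    by (rule nn_integral_cmult) (use f1m g1m in measurable)
  also have "\<dots> \<le> ennreal c0 * ennreal (D1 powr (1 / lam) * IA powr (1 / q))"
    by (rule mult_left_mono[OF Hol]) simp
  also have "\<dots> = ennreal (c0 * (D1 powr (1 / lam) * IA powr (1 / q)))"
    using c0nn by (simp add: ennreal_mult)
  finally have "(\<integral>x. G x \<partial>lebesgue) \<le> c0 * (D1 powr (1 / lam) * IA powr (1 / q))"
    by (intro integral_real_bounded) (use c0nn in auto)
  then have "Jfun lam b u r \<le> c0 * (D1 powr (1 / lam) * IA powr (1 / q))"
    using S1 S2 by linarith
  moreover have "1 / q = (lam - 1) / lam" using lam by (simp add: q_def)
  ultimately show ?thesis by (simp add: c0_def N_def K_def D1_def mult_ac)
qed



lemma real_core: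
  fixes lam M NK Jr J' \<delta> IA :: real
  assumes lam: "lam > 1" and M: "M \<ge> 1" and Jr: "Jr > 0" and J'2: "2 * Jr \<le> J'" and J'4: "J' \<le> 4 * Jr"
    and \<delta>: "\<delta> > 0" and IA: "IA > 0" and NK: "NK \<ge> 0"
    and key: "Jr \<le> NK / \<delta> powr M * (J' - Jr) powr (1 / lam) * IA powr ((lam - 1) / lam)"
  shows "\<delta> * IA powr ((1 / lam - 1) / M) \<le>
     (3 * NK + 1) powr (1 / M) / (1 - 2 powr ((1 / lam - 1) / M)) *
       (Jr powr ((1 / lam - 1) / M) - J' powr ((1 / lam - 1) / M))"
proof -
  define p where "p = (lam - 1) / lam"
  define e where "e = (1 / lam - 1) / M"
  have p: "p > 0" "p < 1" "1 / lam = 1 - p" using lam by (auto simp: p_def field_simps)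
  have e: "e = - p / M" "e < 0" using lam M p by (auto simp: e_def p_def field_simps)
  have "(J' - Jr) powr (1 / lam) \<le> (3 * Jr) powr (1 / lam)"
    using J'2 J'4 Jr lam by (intro powr_mono2) auto
  also have "\<dots> = 3 powr (1 / lam) * Jr powr (1 / lam)" using Jr by (simp add: powr_mult)
  also have "\<dots> \<le> 3 * Jr powr (1 / lam)"
  proof -
    have "3 powr (1 / lam) \<le> 3 powr 1" using lam by (intro powr_mono) auto
    then show ?thesis by (intro mult_right_mono) auto
  qed
  finally have j1: "(J' - Jr) powr (1 / lam) \<le> 3 * Jr powr (1 / lam)" .
  have dm: "\<delta> powr M > 0" using \<delta> by simp
  have "NK / \<delta> powr M * (J' - Jr) powr (1 / lam) \<le> NK / \<delta> powr M * (3 * Jr powr (1 / lam))"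
    using j1 NK dm by (intro mult_left_mono) auto
  then have "NK / \<delta> powr M * (J' - Jr) powr (1 / lam) * IA powr p \<le> NK / \<delta> powr M * (3 * Jr powr (1 / lam)) * IA powr p"
    by (intro mult_right_mono) auto
  then have "Jr \<le> NK / \<delta> powr M * (3 * Jr powr (1 / lam)) * IA powr p"
    using key unfolding p_def by linarith
  then have A1: "Jr * \<delta> powr M \<le> 3 * NK * Jr powr (1 / lam) * IA powr p"
    using dm by (simp add: field_simps)
  have eqJ: "Jr = Jr powr p * Jr powr (1 / lam)"
    using Jr p by (simp add: powr_add[symmetric])
  have A2: "Jr powr p * \<delta> powr M * Jr powr (1 / lam) = Jr * \<delta> powr M"
  proof -
    have "Jr powr p * \<delta> powr M * Jr powr (1 / lam) = (Jr powr p * Jr powr (1 / lam)) * \<delta> powr M"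
      by (simp add: mult_ac)
    then show ?thesis using eqJ by simp
  qed
  have A3: "3 * NK * Jr powr (1 / lam) * IA powr p = (3 * NK * IA powr p) * Jr powr (1 / lam)"
    by (simp add: mult_ac)
  have "Jr powr p * \<delta> powr M * Jr powr (1 / lam) \<le> (3 * NK * IA powr p) * Jr powr (1 / lam)"
    using A1 A2 A3 by linarith
  then have "Jr powr p * \<delta> powr M \<le> 3 * NK * IA powr p"
    using Jr by (simp add: mult_le_cancel_right)
  also have "\<dots> \<le> (3 * NK + 1) * IA powr p" by (intro mult_right_mono) auto
  finally have "(Jr powr p * \<delta> powr M) powr (1 / M) \<le> ((3 * NK + 1) * IA powr p) powr (1 / M)"
    using M by (intro powr_mono2) auto
  then have "Jr powr (p / M) * \<delta> \<le> (3 * NK + 1) powr (1 / M) * IA powr (p / M)"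
    using M Jr \<delta> IA NK by (simp add: powr_mult powr_powr)
  then have "\<delta> * IA powr e \<le> (3 * NK + 1) powr (1 / M) * Jr powr e"
  proof -
    assume h: "Jr powr (p / M) * \<delta> \<le> (3 * NK + 1) powr (1 / M) * IA powr (p / M)"
    define X where "X = Jr powr (p / M)"
    define Y where "Y = IA powr (p / M)"
    define C where "C = (3 * NK + 1) powr (1 / M)"
    have X: "X > 0" using Jr by (simp add: X_def)
    have Y: "Y > 0" using IA by (simp add: Y_def)
    have ie: "IA powr e = inverse Y" "Jr powr e = inverse X"
      unfolding e(1) X_def Y_def by (simp_all add: powr_minus)
    have "X * \<delta> \<le> C * Y" using h by (simp add: X_def Y_def C_def)
    then have "\<delta> / Y \<le> C / X" using X Y by (simp add: divide_simps mult.commute)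
    then show ?thesis unfolding ie C_def by (simp add: divide_inverse)
  qed
  moreover have "J' powr e \<le> 2 powr e * Jr powr e"
  proof -
    have "J' powr e \<le> (2 * Jr) powr e" using e J'2 Jr by (intro powr_mono2') auto
    then show ?thesis using Jr by (simp add: powr_mult)
  qed
  moreover have "2 powr e < 1" using e by (simp add: powr_less_one)
  ultimately have "\<delta> * IA powr e \<le> (3 * NK + 1) powr (1 / M) / (1 - 2 powr e) * (Jr powr e - J' powr e)"
  proof -
    assume a1: "\<delta> * IA powr e \<le> (3 * NK + 1) powr (1 / M) * Jr powr e"
      and a2: "J' powr e \<le> 2 powr e * Jr powr e" and a3: "2 powr e < 1"
    have "(3 * NK + 1) powr (1 / M) * Jr powr e
       = (3 * NK + 1) powr (1 / M) / (1 - 2 powr e) * ((1 - 2 powr e) * Jr powr e)"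
    proof -
      have "1 - 2 powr e \<noteq> 0" using a3 by linarith
      then show ?thesis by simp
    qed
    also have "\<dots> \<le> (3 * NK + 1) powr (1 / M) / (1 - 2 powr e) * (Jr powr e - J' powr e)"
      using a2 a3 by (intro mult_left_mono) (auto simp: algebra_simps)
    finally show ?thesis using a1 by linarith
  qed
  then show ?thesis unfolding e_def .
qed



lemma J_integrable:
  assumes LI: "loc_integrable (\<lambda>x. b x * \<bar>u x\<bar> powr lam)"
  shows "integrable lebesgue (\<lambda>x. indicator (ball (0::real^'n::finite) s) x * (b x * \<bar>u x\<bar> powr lam))"
proof -
  have "set_integrable lebesgue (ball (0::real^'n) s) (\<lambda>x. b x * \<bar>u x\<bar> powr lam)"
    by (rule set_integrable_subset[of _ "cball 0 s"]) (use LI in \<open>auto simp: loc_integrable_def\<close>)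
  then show ?thesis by (simp add: set_integrable_def)
qed

lemma J_eq_int: "Jfun lam b u s = (\<integral>x. indicator (ball (0::real^'n::finite) s) x * (b x * \<bar>u x\<bar> powr lam) \<partial>lebesgue)"
  by (simp add: Jfun_def set_lebesgue_integral_def)

lemma J_mono:
  assumes LI: "loc_integrable (\<lambda>x. b x * \<bar>u x\<bar> powr lam)" and bpos: "\<forall>x. b x > (0::real)"
    and st: "s \<le> t"
  shows "Jfun lam b u s \<le> Jfun lam b (u :: real^'n::finite \<Rightarrow> real) t"
  unfolding J_eq_int
proof (rule integral_mono[OF J_integrable[OF LI] J_integrable[OF LI]])
  fix x :: "real^'n"
  have "b x * \<bar>u x\<bar> powr lam \<ge> 0" using bpos[rule_format, of x] by simp
  then show "indicator (ball 0 s) x * (b x * \<bar>u x\<bar> powr lam) \<le> indicator (ball 0 t) x * (b x * \<bar>u x\<bar> powr lam)"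
    using st by (auto simp: indicator_def)
qed

lemma J_cont:
  assumes LI: "loc_integrable (\<lambda>x. b x * \<bar>u x\<bar> powr lam)" and bpos: "\<forall>x. b x > (0::real)"
  shows "continuous_on {s1..s2} (\<lambda>s. Jfun lam b (u :: real^'n::finite \<Rightarrow> real) s)"
proof (rule continuous_on_sequentiallyI)
  fix xn :: "nat \<Rightarrow> real" and a
  assume xn: "\<forall>n. xn n \<in> {s1..s2}" and a: "a \<in> {s1..s2}" and lim: "xn \<longlonglongrightarrow> a"
  define f where "f x = b x * \<bar>u x\<bar> powr lam" for x :: "real^'n"
  have fnn: "f x \<ge> 0" for x using bpos[rule_format, of x] by (simp add: f_def)
  have intC: "integrable lebesgue (\<lambda>x. indicator (cball (0::real^'n) s2) x * f x)"
    using LI unfolding loc_integrable_def set_integrable_def f_def by simp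
  have "(\<lambda>i. \<integral>x. indicator (ball 0 (xn i)) x * f x \<partial>lebesgue) \<longlonglongrightarrow> (\<integral>x. indicator (ball 0 a) x * f x \<partial>lebesgue)"
  proof (rule integral_dominated_convergence[OF _ _ intC])
    show "(\<lambda>x. indicator (ball 0 a) x * f x) \<in> borel_measurable lebesgue"
      using J_integrable[OF LI, of a] unfolding f_def by auto
    show "(\<lambda>x. indicator (ball 0 (xn i)) x * f x) \<in> borel_measurable lebesgue" for i
      using J_integrable[OF LI, of "xn i"] unfolding f_def by auto
    show "AE x in lebesgue. norm (indicator (ball 0 (xn i)) x * f x) \<le> indicator (cball 0 s2) x * f x" for i
    proof (intro AE_I2)
      fix x :: "real^'n"
      have "xn i \<le> s2" using xn by auto
      then show "norm (indicator (ball 0 (xn i)) x * f x) \<le> indicator (cball 0 s2) x * f x"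
        using fnn[of x] by (auto simp: indicator_def)
    qed
    have "sphere (0::real^'n) a \<in> null_sets lebesgue"
      using negligible_sphere negligible_iff_null_sets by blast
    then show "AE x in lebesgue. (\<lambda>i. indicator (ball 0 (xn i)) x * f x) \<longlonglongrightarrow> indicator (ball 0 a) x * f x"
    proof (rule AE_mp[OF AE_not_in], intro AE_I2 impI)
      fix x :: "real^'n" assume "x \<notin> sphere 0 a"
      then consider "norm x < a" | "norm x > a" by (auto simp: sphere_def dist_norm) linarith
      then show "(\<lambda>i. indicator (ball 0 (xn i)) x * f x) \<longlonglongrightarrow> indicator (ball 0 a) x * f x"
      proof cases
        case 1
        then have "eventually (\<lambda>i. xn i > norm x) sequentially" using order_tendstoD(1)[OF lim 1] by simp
        then have "eventually (\<lambda>i. indicator (ball 0 a) x * f x = indicator (ball 0 (xn i)) x * f x) sequentially"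
          by eventually_elim (use 1 in \<open>auto simp: indicator_def\<close>)
        then show ?thesis by (rule Lim_transform_eventually[OF tendsto_const])
      next
        case 2
        then have "eventually (\<lambda>i. xn i < norm x) sequentially" using order_tendstoD(2)[OF lim 2] by simp
        then have "eventually (\<lambda>i. indicator (ball 0 a) x * f x = indicator (ball 0 (xn i)) x * f x) sequentially"
          by eventually_elim (use 2 in \<open>auto simp: indicator_def\<close>)
        then show ?thesis by (rule Lim_transform_eventually[OF tendsto_const])
      qed
    qed
  qed
  then show "(\<lambda>n. Jfun lam b u (xn n)) \<longlonglongrightarrow> Jfun lam b u a"
    unfolding J_eq_int f_def .
qed



definition gfun :: "real \<Rightarrow> real \<Rightarrow> nat \<Rightarrow> 'n::finite itself \<Rightarrow> (real^'n \<Rightarrow> real) \<Rightarrow> (real^'n \<Rightarrow> real) \<Rightarrow> real \<Rightarrow> ennreal" where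
  "gfun lam \<sigma> m _ a b r = ennreal (r powr ((1 / lam - 1) * real CARD('n) / real m)
                   * hfun lam \<sigma> a b r powr (1 / (lam * real m)))"

definition LL :: "real \<Rightarrow> nat \<Rightarrow> 'n::finite itself \<Rightarrow> real" where
  "LL lam m _ = (3 * (real (card (mindices m :: ('n \<Rightarrow> nat) set)) * KK m TYPE('n)) + 1) powr (1 / real m)
      / (1 - 2 powr ((1 / lam - 1) / real m))"

lemma pair_est:
  fixes aa :: "('n::finite \<Rightarrow> nat) \<Rightarrow> real^'n \<Rightarrow> real \<Rightarrow> real"
    and a b u :: "real^'n \<Rightarrow> real" and lam \<sigma> r1 r2 \<rho> \<rho>' :: real
  assumes bpos: "\<forall>x. b x > 0" and bm: "b \<in> borel_measurable lebesgue"
    and apos: "\<forall>x. a x > 0" and am: "a \<in> borel_measurable lebesgue"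
    and AEb: "AE x in lebesgue. \<forall>\<zeta> \<alpha>. \<alpha> \<in> mindices m \<longrightarrow> \<bar>aa \<alpha> x \<zeta>\<bar> \<le> a x * \<bar>\<zeta>\<bar>"
    and sol: "is_solution m lam aa b u"
    and m: "m \<ge> 1" and lam: "lam > 1" and \<sigma>: "\<sigma> > 1"
    and r1: "0 < r1" and r2: "r2 \<le> sqrt \<sigma> * r1"
    and rr: "r1 \<le> \<rho>" "\<rho> < \<rho>'" "\<rho>' \<le> r2"
    and J2: "2 * Jfun lam b u \<rho> \<le> Jfun lam b u \<rho>'" and J4: "Jfun lam b u \<rho>' \<le> 4 * Jfun lam b u \<rho>"
    and Jpos: "Jfun lam b u \<rho> > 0"
  shows "\<exists>S :: real \<Rightarrow> ennreal. S \<in> borel_measurable lborel \<and>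
     (\<forall>r\<in>{\<rho>..\<rho>'}. gfun lam \<sigma> m TYPE('n) a b r \<le> S r) \<and>
     (\<integral>\<^sup>+ r. S r * indicator {\<rho>..\<rho>'} r \<partial>lborel)
        \<le> ennreal (LL lam m TYPE('n) * (Jfun lam b u \<rho> powr ((1 / lam - 1) / real m)
                  - Jfun lam b u \<rho>' powr ((1 / lam - 1) / real m)))"
proof -
  define w where "w x = a x powr (lam / (lam - 1)) * b x powr (- 1 / (lam - 1))" for x
  define W where "W S = (\<integral>\<^sup>+ x \<in> S. ennreal (w x) \<partial>lebesgue)" for S :: "(real^'n) set"
  define A where "A = ball (0::real^'n) \<rho>' - ball 0 \<rho>"
  define ann where "ann r = ball (0::real^'n) (sqrt \<sigma> * r) - ball 0 (r / sqrt \<sigma>)" for r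
  define e where "e = (1 / lam - 1) / real m"
  define n where "n = real CARD('n)"
  have e: "e < 0" using lam m by (simp add: e_def divide_neg_pos field_simps)
  have s1: "sqrt \<sigma> > 0" using \<sigma> by simp
  have sub: "A \<subseteq> ann r" if "r \<in> {\<rho>..\<rho>'}" for r
  proof
    fix x assume "x \<in> A"
    then have x: "\<rho> \<le> norm x" "norm x < \<rho>'" by (auto simp: A_def)
    have "sqrt \<sigma> * r1 \<le> sqrt \<sigma> * r" using that rr s1 by (intro mult_left_mono) auto
    then have "norm x < sqrt \<sigma> * r" using x rr r2 by linarith
    moreover have "r \<le> sqrt \<sigma> * r1" using that rr r2 by auto
    then have "r / sqrt \<sigma> \<le> r1" using s1 by (simp add: divide_le_eq mult.commute)
    then have "r / sqrt \<sigma> \<le> norm x" using x rr by linarith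
    ultimately show "x \<in> ann r" by (auto simp: ann_def)
  qed
  have Wmono: "W A \<le> W (ann r)" if "r \<in> {\<rho>..\<rho>'}" for r
    unfolding W_def using sub[OF that]
    by (intro nn_integral_mono) (auto simp: indicator_def)
  have hfun_eq: "hfun lam \<sigma> a b r = (if W (ann r) = \<infinity> then 0 else (enn2real (W (ann r)) / r ^ CARD('n)) powr (1 - lam))" for r
    by (simp add: hfun_def Let_def W_def ann_def w_def)
  have g_zero: "gfun lam \<sigma> m TYPE('n) a b r = 0" if "W (ann r) = \<infinity>" for r
    using that by (simp add: gfun_def hfun_eq)
  have NK: "real (card (mindices m :: ('n \<Rightarrow> nat) set)) * KK m TYPE('n) \<ge> 0"
    unfolding KK_def by (intro mult_nonneg_nonneg sum_nonneg wtl_nonneg) auto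
  have LLpos: "LL lam m TYPE('n) \<ge> 0"
  proof -
    have "2 powr ((1 / lam - 1) / real m) < 1" using e by (simp add: e_def powr_less_one)
    then show ?thesis unfolding LL_def by simp
  qed
  have Jr: "Jfun lam b u \<rho> powr e - Jfun lam b u \<rho>' powr e \<ge> 0"
    using Jpos J2 e by (intro diff_ge_0_iff_ge[THEN iffD2] powr_mono2') auto
  show ?thesis
  proof (cases "W A = \<infinity>")
    case True
    show ?thesis
    proof (intro exI[of _ "\<lambda>_. 0"] conjI ballI)
      fix r assume r: "r \<in> {\<rho>..\<rho>'}"
      have "W (ann r) = \<infinity>" using Wmono[OF r] True by (simp add: top_unique)
      then show "gfun lam \<sigma> m TYPE('n) a b r \<le> 0" using g_zero by simp
    qed auto
  next
    case False
    then obtain IA where IA: "W A = ennreal IA" "IA \<ge> 0" by (cases "W A") auto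
    have key: "Jfun lam b u \<rho> \<le> real (card (mindices m :: ('n \<Rightarrow> nat) set)) * KK m TYPE('n) / (\<rho>' - \<rho>) ^ m
           * (Jfun lam b u \<rho>' - Jfun lam b u \<rho>) powr (1 / lam) * IA powr ((lam - 1) / lam)"
      by (rule key_est[OF bpos bm apos am AEb sol m lam _ rr(2)])
         (use IA r1 rr in \<open>auto simp: W_def A_def w_def\<close>)
    have IApos: "IA > 0"
    proof (rule ccontr)
      assume "\<not> IA > 0"
      then have "IA = 0" using IA by simp
      then show False using key Jpos lam by simp
    qed
    have gle: "gfun lam \<sigma> m TYPE('n) a b r \<le> ennreal (IA powr e)" if r: "r \<in> {\<rho>..\<rho>'}" for r
    proof (cases "W (ann r) = \<infinity>")
      case True
      then show ?thesis using g_zero by simp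
    next
      case False
      then obtain I where I: "W (ann r) = ennreal I" "I \<ge> 0" by (cases "W (ann r)") auto
      have "ennreal IA \<le> ennreal I" using Wmono[OF r] IA I by simp
      then have IAI: "IA \<le> I" using I by simp
      have rpos: "r > 0" using r rr r1 by auto
      have "hfun lam \<sigma> a b r = (I / r ^ CARD('n)) powr (1 - lam)"
        using I by (simp add: hfun_eq)
      then have "r powr ((1 / lam - 1) * real CARD('n) / real m) * hfun lam \<sigma> a b r powr (1 / (lam * real m))
          = r powr (e * n) * (I / r ^ CARD('n)) powr e"
        using lam m by (simp add: powr_powr e_def n_def field_simps)
      also have "\<dots> = r powr (e * n) * (I powr e / (r powr n) powr e)"
        using rpos by (simp add: powr_divide powr_realpow n_def)
      also have "\<dots> = I powr e"
        using rpos by (simp add: powr_powr mult.commute)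
      also have "\<dots> \<le> IA powr e"
        using e IApos IAI by (intro powr_mono2') auto
      finally show ?thesis unfolding gfun_def by (rule ennreal_leI)
    qed
    show ?thesis
    proof (intro exI[of _ "\<lambda>_. ennreal (IA powr e)"] conjI ballI)
      show "(\<lambda>_. ennreal (IA powr e)) \<in> borel_measurable lborel" by simp
      show "gfun lam \<sigma> m TYPE('n) a b r \<le> ennreal (IA powr e)" if "r \<in> {\<rho>..\<rho>'}" for r
        using gle that by simp
      have "(\<integral>\<^sup>+ r. ennreal (IA powr e) * indicator {\<rho>..\<rho>'} r \<partial>lborel) = ennreal (IA powr e) * ennreal (\<rho>' - \<rho>)"
        using rr by (simp add: nn_integral_cmult_indicator)
      also have "\<dots> = ennreal ((\<rho>' - \<rho>) * IA powr e)"
        using rr by (simp add: ennreal_mult[symmetric] mult.commute)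
      also have "\<dots> \<le> ennreal (LL lam m TYPE('n) * (Jfun lam b u \<rho> powr ((1 / lam - 1) / real m)
                  - Jfun lam b u \<rho>' powr ((1 / lam - 1) / real m)))"
      proof (rule ennreal_leI)
        have key': "Jfun lam b u \<rho> \<le> real (card (mindices m :: ('n \<Rightarrow> nat) set)) * KK m TYPE('n) / (\<rho>' - \<rho>) powr real m
           * (Jfun lam b u \<rho>' - Jfun lam b u \<rho>) powr (1 / lam) * IA powr ((lam - 1) / lam)"
          using key rr by (simp add: powr_realpow)
        show "(\<rho>' - \<rho>) * IA powr e \<le> LL lam m TYPE('n) * (Jfun lam b u \<rho> powr ((1 / lam - 1) / real m)
                  - Jfun lam b u \<rho>' powr ((1 / lam - 1) / real m))"
          unfolding e_def LL_def
          by (rule real_core[OF lam _ Jpos J2 J4 _ IApos NK key']) (use m rr in auto)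
      qed
      finally show "(\<integral>\<^sup>+ r. ennreal (IA powr e) * indicator {\<rho>..\<rho>'} r \<partial>lborel)
        \<le> ennreal (LL lam m TYPE('n) * (Jfun lam b u \<rho> powr ((1 / lam - 1) / real m)
                  - Jfun lam b u \<rho>' powr ((1 / lam - 1) / real m)))" .
    qed
  qed
qed



lemma chain_est:
  fixes aa :: "('n::finite \<Rightarrow> nat) \<Rightarrow> real^'n \<Rightarrow> real \<Rightarrow> real"
    and a b u :: "real^'n \<Rightarrow> real" and lam \<sigma> r1 r2 :: real
  assumes bpos: "\<forall>x. b x > 0" and bm: "b \<in> borel_measurable lebesgue"
    and apos: "\<forall>x. a x > 0" and am: "a \<in> borel_measurable lebesgue"
    and AEb: "AE x in lebesgue. \<forall>\<zeta> \<alpha>. \<alpha> \<in> mindices m \<longrightarrow> \<bar>aa \<alpha> x \<zeta>\<bar> \<le> a x * \<bar>\<zeta>\<bar>"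
    and sol: "is_solution m lam aa b u"
    and m: "m \<ge> 1" and lam: "lam > 1" and \<sigma>: "\<sigma> > 1"
    and r1: "0 < r1" and r2: "r2 \<le> sqrt \<sigma> * r1"
  shows "r1 \<le> \<rho> \<Longrightarrow> \<rho> < \<rho>' \<Longrightarrow> \<rho>' \<le> r2 \<Longrightarrow>
    2 * Jfun lam b u \<rho> \<le> Jfun lam b u \<rho>' \<Longrightarrow> Jfun lam b u \<rho>' \<le> 2 ^ (k + 2) * Jfun lam b u \<rho> \<Longrightarrow>
    Jfun lam b u \<rho> > 0 \<Longrightarrow>
    \<exists>S :: real \<Rightarrow> ennreal. S \<in> borel_measurable lborel \<and>
     (\<forall>r\<in>{\<rho>..\<rho>'}. gfun lam \<sigma> m TYPE('n) a b r \<le> S r) \<and>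
     (\<integral>\<^sup>+ r. S r * indicator {\<rho>..\<rho>'} r \<partial>lborel)
        \<le> ennreal (LL lam m TYPE('n) * (Jfun lam b u \<rho> powr ((1 / lam - 1) / real m)
                  - Jfun lam b u \<rho>' powr ((1 / lam - 1) / real m)))"
proof (induction k arbitrary: \<rho>)
  case 0
  then show ?case
    by (intro pair_est[OF bpos bm apos am AEb sol m lam \<sigma> r1 r2]) auto
next
  case (Suc k)
  note rr = Suc.prems(1-3) and J2 = Suc.prems(4) and Jk = Suc.prems(5) and Jpos = Suc.prems(6)
  show ?case
  proof (cases "Jfun lam b u \<rho>' \<le> 4 * Jfun lam b u \<rho>")
    case True
    then show ?thesis
      by (intro pair_est[OF bpos bm apos am AEb sol m lam \<sigma> r1 r2 rr J2 _ Jpos])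
  next
    case False
    have LI: "loc_integrable (\<lambda>x. b x * \<bar>u x\<bar> powr lam)"
      using sol by (simp add: is_solution_def)
    obtain s where s: "\<rho> \<le> s" "s \<le> \<rho>'" "Jfun lam b u s = 2 * Jfun lam b u \<rho>"
    proof -
      have "\<exists>x. \<rho> \<le> x \<and> x \<le> \<rho>' \<and> Jfun lam b u x = 2 * Jfun lam b u \<rho>"
        by (rule IVT'[where f="\<lambda>s. Jfun lam b u s"]) (use Jpos rr J2 J_cont[OF LI bpos] in auto)
      then show ?thesis using that by blast
    qed
    have s1: "\<rho> < s" using s Jpos by (cases "s = \<rho>") auto
    have s2: "s < \<rho>'" using s False Jpos by (cases "s = \<rho>'") auto
    obtain S1 where S1: "S1 \<in> borel_measurable lborel" "\<forall>r\<in>{\<rho>..s}. gfun lam \<sigma> m TYPE('n) a b r \<le> S1 r"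
      "(\<integral>\<^sup>+ r. S1 r * indicator {\<rho>..s} r \<partial>lborel)
        \<le> ennreal (LL lam m TYPE('n) * (Jfun lam b u \<rho> powr ((1 / lam - 1) / real m)
                  - Jfun lam b u s powr ((1 / lam - 1) / real m)))"
    proof -
      have sr2: "s \<le> r2" using s2 rr by simp
      have "2 * Jfun lam b u \<rho> \<le> Jfun lam b u s" "Jfun lam b u s \<le> 4 * Jfun lam b u \<rho>"
        using s Jpos by auto
      from pair_est[OF bpos bm apos am AEb sol m lam \<sigma> r1 r2 rr(1) s1 sr2 this Jpos]
      show ?thesis using that by blast
    qed
    have IHp: "Jfun lam b u \<rho>' \<le> 2 ^ (k + 2) * Jfun lam b u s"
      using Jk s by (simp add: power_Suc mult_ac)
    obtain S2 where S2: "S2 \<in> borel_measurable lborel" "\<forall>r\<in>{s..\<rho>'}. gfun lam \<sigma> m TYPE('n) a b r \<le> S2 r"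
      "(\<integral>\<^sup>+ r. S2 r * indicator {s..\<rho>'} r \<partial>lborel)
        \<le> ennreal (LL lam m TYPE('n) * (Jfun lam b u s powr ((1 / lam - 1) / real m)
                  - Jfun lam b u \<rho>' powr ((1 / lam - 1) / real m)))"
      using Suc.IH[of s] s s1 s2 rr False Jpos IHp by auto
    define S where "S r = S1 r * indicator {..s} r + S2 r * indicator {s<..} r" for r
    show ?thesis
    proof (intro exI[of _ S] conjI ballI)
      show "S \<in> borel_measurable lborel" unfolding S_def[abs_def] using S1(1) S2(1) by measurable
      show "gfun lam \<sigma> m TYPE('n) a b r \<le> S r" if "r \<in> {\<rho>..\<rho>'}" for r
        using that S1(2) S2(2) by (cases "r \<le> s") (auto simp: S_def)
      have "(\<integral>\<^sup>+ r. S r * indicator {\<rho>..\<rho>'} r \<partial>lborel) \<le>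
          (\<integral>\<^sup>+ r. S1 r * indicator {\<rho>..s} r + S2 r * indicator {s..\<rho>'} r \<partial>lborel)"
        by (intro nn_integral_mono) (auto simp: S_def indicator_def)
      also have "\<dots> = (\<integral>\<^sup>+ r. S1 r * indicator {\<rho>..s} r \<partial>lborel) + (\<integral>\<^sup>+ r. S2 r * indicator {s..\<rho>'} r \<partial>lborel)"
        using S1(1) S2(1) by (intro nn_integral_add) auto
      also have "\<dots> \<le> ennreal (LL lam m TYPE('n) * (Jfun lam b u \<rho> powr ((1 / lam - 1) / real m)
                  - Jfun lam b u s powr ((1 / lam - 1) / real m)))
         + ennreal (LL lam m TYPE('n) * (Jfun lam b u s powr ((1 / lam - 1) / real m)
                  - Jfun lam b u \<rho>' powr ((1 / lam - 1) / real m)))"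
        by (intro add_mono S1(3) S2(3))
      also have "\<dots> = ennreal (LL lam m TYPE('n) * (Jfun lam b u \<rho> powr ((1 / lam - 1) / real m)
                  - Jfun lam b u \<rho>' powr ((1 / lam - 1) / real m)))"
      proof -
        have e: "(1 / lam - 1) / real m < 0" using lam m by (simp add: divide_neg_pos)
        have LLpos: "LL lam m TYPE('n) \<ge> 0"
        proof -
          have NK: "real (card (mindices m :: ('n \<Rightarrow> nat) set)) * KK m TYPE('n) \<ge> 0"
            unfolding KK_def by (intro mult_nonneg_nonneg sum_nonneg wtl_nonneg) auto
          have "2 powr ((1 / lam - 1) / real m) < 1" using e by (simp add: powr_less_one)
          then show ?thesis unfolding LL_def using NK by simp
        qed
        have d1: "Jfun lam b u \<rho> powr ((1 / lam - 1) / real m) - Jfun lam b u s powr ((1 / lam - 1) / real m) \<ge> 0"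
          using Jpos s e by (intro diff_ge_0_iff_ge[THEN iffD2] powr_mono2') auto
        have d2: "Jfun lam b u s powr ((1 / lam - 1) / real m) - Jfun lam b u \<rho>' powr ((1 / lam - 1) / real m) \<ge> 0"
          using Jpos s e J2 by (intro diff_ge_0_iff_ge[THEN iffD2] powr_mono2') auto
        define X where "X = LL lam m TYPE('n) * (Jfun lam b u \<rho> powr ((1 / lam - 1) / real m)
                  - Jfun lam b u s powr ((1 / lam - 1) / real m))"
        define Y where "Y = LL lam m TYPE('n) * (Jfun lam b u s powr ((1 / lam - 1) / real m)
                  - Jfun lam b u \<rho>' powr ((1 / lam - 1) / real m))"
        have "X \<ge> 0" "Y \<ge> 0" using LLpos d1 d2 by (simp_all add: X_def Y_def)
        then have "ennreal X + ennreal Y = ennreal (X + Y)" by (simp add: ennreal_plus)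
        moreover have "X + Y = LL lam m TYPE('n) * (Jfun lam b u \<rho> powr ((1 / lam - 1) / real m)
                  - Jfun lam b u \<rho>' powr ((1 / lam - 1) / real m))"
          by (simp add: X_def Y_def algebra_simps)
        ultimately show ?thesis by (simp add: X_def Y_def)
      qed
      finally show "(\<integral>\<^sup>+ r. S r * indicator {\<rho>..\<rho>'} r \<partial>lborel)
        \<le> ennreal (LL lam m TYPE('n) * (Jfun lam b u \<rho> powr ((1 / lam - 1) / real m)
                  - Jfun lam b u \<rho>' powr ((1 / lam - 1) / real m)))" .
    qed
  qed
qed

theorem lemma3p2:
  fixes m :: nat and lam \<sigma> :: real
  assumes "m \<ge> 1" and "lam > 1" and "\<sigma> > 1"
  shows "\<exists>C>0. \<forall>(aa :: ('n::finite \<Rightarrow> nat) \<Rightarrow> real^'n \<Rightarrow> real \<Rightarrow> real)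
            (a :: real^'n \<Rightarrow> real) (b :: real^'n \<Rightarrow> real) (u :: real^'n \<Rightarrow> real) r1 r2.
     (\<forall>x. b x > 0) \<and> b \<in> borel_measurable lebesgue \<and>
     (\<forall>x. a x > 0) \<and> a \<in> borel_measurable lebesgue \<and>
     (AE x in lebesgue. \<forall>\<zeta> \<alpha>. \<alpha> \<in> mindices m \<longrightarrow> \<bar>aa \<alpha> x \<zeta>\<bar> \<le> a x * \<bar>\<zeta>\<bar>) \<and>
     is_solution m lam aa b u \<and>
     0 < r1 \<and> r1 < r2 \<and> r2 \<le> sqrt \<sigma> * r1 \<and>
     2 * Jfun lam b u r1 \<le> Jfun lam b u r2 \<and> Jfun lam b u r1 > 0
     \<longrightarrow>
     ennreal C * (\<integral>\<^sup>+ r \<in> {r1..r2}.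
          ennreal (r powr ((1 / lam - 1) * real CARD('n) / real m)
                   * hfun lam \<sigma> a b r powr (1 / (lam * real m))) \<partial>lborel)
       \<le> ennreal (Jfun lam b u r1 powr ((1 / lam - 1) / real m)
                  - Jfun lam b u r2 powr ((1 / lam - 1) / real m))"
proof -
  have e: "(1 / lam - 1) / real m < 0" using assms by (simp add: divide_neg_pos)
  have LLpos: "LL lam m TYPE('n) > 0"
  proof -
    have NK: "real (card (mindices m :: ('n \<Rightarrow> nat) set)) * KK m TYPE('n) \<ge> 0"
      unfolding KK_def by (intro mult_nonneg_nonneg sum_nonneg wtl_nonneg) auto
    have "2 powr ((1 / lam - 1) / real m) < 1" using e by (simp add: powr_less_one)
    then show ?thesis unfolding LL_def using NK by (simp add: divide_pos_pos)
  qed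
  show ?thesis
  proof (intro exI[of _ "1 / LL lam m TYPE('n)"] conjI allI impI)
    show "1 / LL lam m TYPE('n) > 0" using LLpos by simp
    fix aa :: "('n \<Rightarrow> nat) \<Rightarrow> real^'n \<Rightarrow> real \<Rightarrow> real" and a b u :: "real^'n \<Rightarrow> real" and r1 r2 :: real
    assume H: "(\<forall>x. b x > 0) \<and> b \<in> borel_measurable lebesgue \<and>
     (\<forall>x. a x > 0) \<and> a \<in> borel_measurable lebesgue \<and>
     (AE x in lebesgue. \<forall>\<zeta> \<alpha>. \<alpha> \<in> mindices m \<longrightarrow> \<bar>aa \<alpha> x \<zeta>\<bar> \<le> a x * \<bar>\<zeta>\<bar>) \<and>
     is_solution m lam aa b u \<and>
     0 < r1 \<and> r1 < r2 \<and> r2 \<le> sqrt \<sigma> * r1 \<and>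
     2 * Jfun lam b u r1 \<le> Jfun lam b u r2 \<and> Jfun lam b u r1 > 0"
    then have bpos: "\<forall>x. b x > 0" and bm: "b \<in> borel_measurable lebesgue"
      and apos: "\<forall>x. a x > 0" and am: "a \<in> borel_measurable lebesgue"
      and AEb: "AE x in lebesgue. \<forall>\<zeta> \<alpha>. \<alpha> \<in> mindices m \<longrightarrow> \<bar>aa \<alpha> x \<zeta>\<bar> \<le> a x * \<bar>\<zeta>\<bar>"
      and sol: "is_solution m lam aa b u"
      and r: "0 < r1" "r1 < r2" "r2 \<le> sqrt \<sigma> * r1"
      and J2: "2 * Jfun lam b u r1 \<le> Jfun lam b u r2" and Jpos: "Jfun lam b u r1 > 0"
      by auto
    obtain k where k: "Jfun lam b u r2 / Jfun lam b u r1 < 2 ^ k"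
      using real_arch_pow[of 2 "Jfun lam b u r2 / Jfun lam b u r1"] by auto
    have "2 ^ k \<le> (2::real) ^ (k + 2)" by (intro power_increasing) auto
    then have "2 ^ k * Jfun lam b u r1 \<le> 2 ^ (k + 2) * Jfun lam b u r1"
      using Jpos by (intro mult_right_mono) auto
    moreover have "Jfun lam b u r2 < 2 ^ k * Jfun lam b u r1"
      using k Jpos by (simp add: divide_less_eq)
    ultimately have Jk: "Jfun lam b u r2 \<le> 2 ^ (k + 2) * Jfun lam b u r1" by linarith
    obtain S where S: "S \<in> borel_measurable lborel" "\<forall>r\<in>{r1..r2}. gfun lam \<sigma> m TYPE('n) a b r \<le> S r"
      "(\<integral>\<^sup>+ r. S r * indicator {r1..r2} r \<partial>lborel)
        \<le> ennreal (LL lam m TYPE('n) * (Jfun lam b u r1 powr ((1 / lam - 1) / real m)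
                  - Jfun lam b u r2 powr ((1 / lam - 1) / real m)))"
      using chain_est[OF bpos bm apos am AEb sol assms r(1) r(3) order_refl r(2) order_refl J2 Jk Jpos]
      by blast
    have "(\<integral>\<^sup>+ r \<in> {r1..r2}. ennreal (r powr ((1 / lam - 1) * real CARD('n) / real m)
                   * hfun lam \<sigma> a b r powr (1 / (lam * real m))) \<partial>lborel)
        \<le> (\<integral>\<^sup>+ r. S r * indicator {r1..r2} r \<partial>lborel)"
      using S(2) unfolding gfun_def by (intro nn_integral_mono) (auto simp: indicator_def)
    also note S(3)
    finally have I: "(\<integral>\<^sup>+ r \<in> {r1..r2}. ennreal (r powr ((1 / lam - 1) * real CARD('n) / real m)
                   * hfun lam \<sigma> a b r powr (1 / (lam * real m))) \<partial>lborel)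
        \<le> ennreal (LL lam m TYPE('n) * (Jfun lam b u r1 powr ((1 / lam - 1) / real m)
                  - Jfun lam b u r2 powr ((1 / lam - 1) / real m)))" .
    have "ennreal (1 / LL lam m TYPE('n)) * (\<integral>\<^sup>+ r \<in> {r1..r2}. ennreal (r powr ((1 / lam - 1) * real CARD('n) / real m)
                   * hfun lam \<sigma> a b r powr (1 / (lam * real m))) \<partial>lborel)
        \<le> ennreal (1 / LL lam m TYPE('n)) * ennreal (LL lam m TYPE('n) * (Jfun lam b u r1 powr ((1 / lam - 1) / real m)
                  - Jfun lam b u r2 powr ((1 / lam - 1) / real m)))"
      by (rule mult_left_mono[OF I]) simp
    also have "\<dots> = ennreal (Jfun lam b u r1 powr ((1 / lam - 1) / real m)
                  - Jfun lam b u r2 powr ((1 / lam - 1) / real m))"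
      using LLpos by (simp add: ennreal_mult'[symmetric])
    finally show "ennreal (1 / LL lam m TYPE('n)) * (\<integral>\<^sup>+ r \<in> {r1..r2}. ennreal (r powr ((1 / lam - 1) * real CARD('n) / real m)
                   * hfun lam \<sigma> a b r powr (1 / (lam * real m))) \<partial>lborel)
       \<le> ennreal (Jfun lam b u r1 powr ((1 / lam - 1) / real m)
                  - Jfun lam b u r2 powr ((1 / lam - 1) / real m))" .
  qed
qed


end
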